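(* Let $H_{44}$ and $H_{521}$ be the term-normalized complete homogeneous symmetric polynomials in three variables $x_1,x_2,x_3$ associated to the partitions $(4,4)$ and $(5,2,1)$ of $8$. Then the polynomial $(H_{44}-H_{521})(x_1^2,x_2^2,x_3^2)$ is a sum of squares of polynomials with rational coefficients (in fact a positive rational combination of $41$ squares), so $H_{44}-H_{521}\ge 0$ on $\mathbb{R}^3_{\ge 0}$, while the partitions $(4,4)$ and $(5,2,1)$ are incomparable in dominance order. Thus $H_{44}-H_{521}$ is a counterexample to the statement "$H_\mu - H_\lambda \geq 0$ on the nonnegative orthant implies $\mu$ dominates $\lambda$", and it is degree-minimal: there is no pair of dominance-incomparable partitions $\lambda,\mu$ with $|\lambda|=|\mu|\le 7$ such that $H_\mu-H_\lambda\ge 0$ on the nonnegative orthant.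
   Context: For an integer $d\ge 0$, $h_d(x_1,\dots,x_n)$ denotes the sum of all monomials of degree $d$ in $x_1,\dots,x_n$ (with $h_0=1$), and for a partition $\lambda=(\lambda_1\ge\lambda_2\ge\cdots)$ one sets $h_\lambda=\prod_i h_{\lambda_i}$. The term-normalized version is $H_\lambda(x)=h_\lambda(x)/h_\lambda(1,\dots,1)$. For partitions $\lambda,\mu$ of the same integer, $\mu$ dominates $\lambda$ (written $\mu\succeq\lambda$) if $\mu_1+\cdots+\mu_k\ge\lambda_1+\cdots+\lambda_k$ for all $k$; $\lambda,\mu$ are incomparable if neither dominates the other. A polynomial is a sum of squares if it equals $\sum_i d_i q_i^2$ with $d_i>0$ and $q_i$ polynomials. Explicitly, $(H_{44}-H_{521})(x_1^2,x_2^2,x_3^2)=\frac{1}{9450}\big(17\sum x_i^{16}+9\sum_{i\ne j} x_i^{14}x_j^{2}+\sum_{i\ne j}x_i^{12}x_j^4+18\sum_{i\ne j}x_i^{10}x_j^6+60\sum_{i<j}x_i^8x_j^8-32\sum x_i^{12}x_j^2x_k^2-6\cdot(\ldots)\big)$ as given in the paper; its nonnegativity is meant on $\mathbb{R}^3_{\ge0}$ for the three-variable polynomial. *)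

theory Defs
  imports Complex_Main
begin

definition is_partition :: "nat list \<Rightarrow> bool" where
  "is_partition lam \<longleftrightarrow> sorted_wrt (\<ge>) lam \<and> 0 \<notin> set lam"

definition dominates :: "nat list \<Rightarrow> nat list \<Rightarrow> bool" where
  "dominates mu lam \<longleftrightarrow> sum_list mu = sum_list lam \<and>
     (\<forall>k. sum_list (take k lam) \<le> sum_list (take k mu))"

definition incomparable :: "nat list \<Rightarrow> nat list \<Rightarrow> bool" where
  "incomparable lam mu \<longleftrightarrow> \<not> dominates mu lam \<and> \<not> dominates lam mu"

definition hcomp :: "nat \<Rightarrow> nat \<Rightarrow> (nat \<Rightarrow> real) \<Rightarrow> real" where
  "hcomp n d x = (\<Sum>\<alpha> \<in> {\<alpha>::nat \<Rightarrow> nat. (\<forall>i\<ge>n. \<alpha> i = 0) \<and> (\<Sum>i<n. \<alpha> i) = d}.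
                    \<Prod>i<n. x i ^ \<alpha> i)"

definition hpart :: "nat \<Rightarrow> nat list \<Rightarrow> (nat \<Rightarrow> real) \<Rightarrow> real" where
  "hpart n lam x = prod_list (map (\<lambda>d. hcomp n d x) lam)"

definition Hnorm :: "nat \<Rightarrow> nat list \<Rightarrow> (nat \<Rightarrow> real) \<Rightarrow> real" where
  "Hnorm n lam x = hpart n lam x / hpart n lam (\<lambda>_. 1)"

definition vec3 :: "real \<Rightarrow> real \<Rightarrow> real \<Rightarrow> nat \<Rightarrow> real" where
  "vec3 a b c = (\<lambda>i. if i = 0 then a else if i = 1 then b else c)"

definition ratpoly3 :: "(real \<Rightarrow> real \<Rightarrow> real \<Rightarrow> real) \<Rightarrow> bool" where
  "ratpoly3 q \<longleftrightarrow> (\<exists>N (c :: nat \<Rightarrow> nat \<Rightarrow> nat \<Rightarrow> rat). \<forall>a b e.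
      q a b e = (\<Sum>i\<le>N. \<Sum>j\<le>N. \<Sum>k\<le>N. of_rat (c i j k) * a ^ i * b ^ j * e ^ k))"

definition rat_sos3 :: "nat \<Rightarrow> (real \<Rightarrow> real \<Rightarrow> real \<Rightarrow> real) \<Rightarrow> bool" where
  "rat_sos3 m P \<longleftrightarrow> (\<exists>(ds :: rat list) qs. length ds = m \<and> length qs = m \<and>
      (\<forall>d\<in>set ds. d > 0) \<and> (\<forall>q\<in>set qs. ratpoly3 q) \<and>
      (\<forall>a b e. P a b e = (\<Sum>i<m. of_rat (ds ! i) * ((qs ! i) a b e)\<^sup>2)))"

definition nonneg_orthant :: "nat \<Rightarrow> (nat \<Rightarrow> real) \<Rightarrow> bool" where
  "nonneg_orthant n x \<longleftrightarrow> (\<forall>i<n. x i \<ge> 0)"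

end

theory Submission
  imports Defs
begin


lemma hcomp3: "hcomp 3 d x = (\<Sum>i\<le>d. \<Sum>j\<le>d-i. x 0 ^ i * x 1 ^ j * x 2 ^ (d-i-j))"
proof -
  define S where "S = {\<alpha>::nat\<Rightarrow>nat. (\<forall>i\<ge>3. \<alpha> i = 0) \<and> (\<Sum>i<3. \<alpha> i) = d}"
  define T where "T = (SIGMA i:{..d}. {..d-i})"
  define f where "f = (\<lambda>(i,j). (\<lambda>n::nat. if n=0 then i else if n=1 then j else if n=2 then d-i-j else 0))"
  define g where "g = (\<lambda>\<alpha>::nat\<Rightarrow>nat. (\<alpha> 0, \<alpha> 1))"
  have s3: "(\<Sum>i<3. \<alpha> i) = \<alpha> 0 + \<alpha> 1 + \<alpha> (2::nat)" for \<alpha> :: "nat \<Rightarrow> nat"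
    by (simp add: eval_nat_numeral)
  have bij: "bij_betw f T S"
  proof (rule bij_betw_byWitness[where f'=g])
    show "\<forall>a\<in>T. g (f a) = a" by (auto simp: T_def f_def g_def)
    show "\<forall>a'\<in>S. f (g a') = a'"
    proof
      fix a assume "a \<in> S"
      then have a: "\<forall>i\<ge>3. a i = 0" "a 0 + a 1 + a 2 = d" by (auto simp: S_def s3)
      show "f (g a) = a"
      proof
        fix n show "f (g a) n = a n"
          using a by (cases "n = 0"; cases "n = 1"; cases "n = 2") (auto simp: f_def g_def)
      qed
    qed
    show "f ` T \<subseteq> S" by (auto simp: T_def f_def S_def s3)
    show "g ` S \<subseteq> T" by (auto simp: T_def g_def S_def s3)
  qed
  have "hcomp 3 d x = (\<Sum>\<alpha>\<in>S. \<Prod>i<3. x i ^ \<alpha> i)" by (simp add: hcomp_def S_def)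
  also have "\<dots> = (\<Sum>p\<in>T. \<Prod>i<3. x i ^ f p i)"
    using sum.reindex_bij_betw[OF bij, of "\<lambda>\<alpha>. \<Prod>i<3. x i ^ \<alpha> i"] by simp
  also have "\<dots> = (\<Sum>p\<in>T. x 0 ^ fst p * x 1 ^ snd p * x 2 ^ (d - fst p - snd p))"
    by (rule sum.cong) (auto simp: f_def eval_nat_numeral)
  also have "\<dots> = (\<Sum>i\<le>d. \<Sum>j\<le>d-i. x 0 ^ i * x 1 ^ j * x 2 ^ (d-i-j))"
    unfolding T_def by (subst sum.Sigma) (auto simp: case_prod_beta)
  finally show ?thesis .
qed


lemma h1: "hcomp 3 1 (vec3 A B C) = (A^0*B^0*C^1 + A^0*B^1*C^0 + A^1*B^0*C^0)"
  by (simp add: hcomp3 vec3_def atMost_nat_numeral)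

lemma one1: "hcomp 3 1 (\<lambda>_. 1) = 3"
  by (simp add: hcomp3 atMost_nat_numeral)

lemma h2: "hcomp 3 2 (vec3 A B C) = (A^0*B^0*C^2 + A^0*B^1*C^1 + A^0*B^2*C^0 + A^1*B^0*C^1 + A^1*B^1*C^0 + A^2*B^0*C^0)"
  by (simp add: hcomp3 vec3_def atMost_nat_numeral)

lemma one2: "hcomp 3 2 (\<lambda>_. 1) = 6"
  by (simp add: hcomp3 atMost_nat_numeral)

lemma h4: "hcomp 3 4 (vec3 A B C) = (A^0*B^0*C^4 + A^0*B^1*C^3 + A^0*B^2*C^2 + A^0*B^3*C^1 + A^0*B^4*C^0 + A^1*B^0*C^3 + A^1*B^1*C^2 + A^1*B^2*C^1 + A^1*B^3*C^0 + A^2*B^0*C^2 + A^2*B^1*C^1 + A^2*B^2*C^0 + A^3*B^0*C^1 + A^3*B^1*C^0 + A^4*B^0*C^0)"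
  by (simp add: hcomp3 vec3_def atMost_nat_numeral)

lemma one4: "hcomp 3 4 (\<lambda>_. 1) = 15"
  by (simp add: hcomp3 atMost_nat_numeral)

lemma h5: "hcomp 3 5 (vec3 A B C) = (A^0*B^0*C^5 + A^0*B^1*C^4 + A^0*B^2*C^3 + A^0*B^3*C^2 + A^0*B^4*C^1 + A^0*B^5*C^0 + A^1*B^0*C^4 + A^1*B^1*C^3 + A^1*B^2*C^2 + A^1*B^3*C^1 + A^1*B^4*C^0 + A^2*B^0*C^3 + A^2*B^1*C^2 + A^2*B^2*C^1 + A^2*B^3*C^0 + A^3*B^0*C^2 + A^3*B^1*C^1 + A^3*B^2*C^0 + A^4*B^0*C^1 + A^4*B^1*C^0 + A^5*B^0*C^0)"
  by (simp add: hcomp3 vec3_def atMost_nat_numeral)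

lemma one5: "hcomp 3 5 (\<lambda>_. 1) = 21"
  by (simp add: hcomp3 atMost_nat_numeral)

lemma one1s: "hcomp 3 (Suc 0) (\<lambda>_. 1) = 3"
  using one1 by simp

lemma e1: "42*(A^0*B^0*C^4 + A^0*B^1*C^3 + A^0*B^2*C^2 + A^0*B^3*C^1 + A^0*B^4*C^0 + A^1*B^0*C^3 + A^1*B^1*C^2 + A^1*B^2*C^1 + A^1*B^3*C^0 + A^2*B^0*C^2 + A^2*B^1*C^1 + A^2*B^2*C^0 + A^3*B^0*C^1 + A^3*B^1*C^0 + A^4*B^0*C^0)^2 - 25*((A^0*B^0*C^5 + A^0*B^1*C^4 + A^0*B^2*C^3 + A^0*B^3*C^2 + A^0*B^4*C^1 + A^0*B^5*C^0 + A^1*B^0*C^4 + A^1*B^1*C^3 + A^1*B^2*C^2 + A^1*B^3*C^1 + A^1*B^4*C^0 + A^2*B^0*C^3 + A^2*B^1*C^2 + A^2*B^2*C^1 + A^2*B^3*C^0 + A^3*B^0*C^2 + A^3*B^1*C^1 + A^3*B^2*C^0 + A^4*B^0*C^1 + A^4*B^1*C^0 + A^5*B^0*C^0)*(A^0*B^0*C^2 + A^0*B^1*C^1 + A^0*B^2*C^0 + A^1*B^0*C^1 + A^1*B^1*C^0 + A^2*B^0*C^0)*(A^0*B^0*C^1 + A^0*B^1*C^0 + A^1*B^0*C^0)) = ((17)*A^0*B^0*C^8 + (9)*A^0*B^1*C^7 + (1)*A^0*B^2*C^6 + (18)*A^0*B^3*C^5 + (60)*A^0*B^4*C^4 + (18)*A^0*B^5*C^3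 + (1)*A^0*B^6*C^2 + (9)*A^0*B^7*C^1 + (17)*A^0*B^8*C^0 + (9)*A^1*B^0*C^7 + (-32)*A^1*B^1*C^6 + (-48)*A^1*B^2*C^5 + (11)*A^1*B^3*C^4 + (11)*A^1*B^4*C^3 + (-48)*A^1*B^5*C^2 + (-32)*A^1*B^6*C^1 + (9)*A^1*B^7*C^0 + (1)*A^2*B^0*C^6 + (-48)*A^2*B^1*C^5 + (-22)*A^2*B^2*C^4 + (-5)*A^2*B^3*C^3 + (-22)*A^2*B^4*C^2 + (-48)*A^2*B^5*C^1 + (1)*A^2*B^6*C^0 + (18)*A^3*B^0*C^5 + (11)*A^3*B^1*C^4 + (-5)*A^3*B^2*C^3 + (-5)*A^3*B^3*C^2 + (11)*A^3*B^4*C^1 + (18)*A^3*B^5*C^0 + (60)*A^4*B^0*C^4 + (11)*A^4*B^1*C^3 + (-22)*A^4*B^2*C^2 + (11)*A^4*B^3*C^1 + (60)*A^4*B^4*C^0 + (18)*A^5*B^0*C^3 + (-48)*A^5*B^1*C^2 + (-48)*A^5*B^2*C^1 + (18)*A^5*B^3*C^0 + (1)*A^6*B^0*C^2 + (-32)*A^6*B^1*C^1 + (1)*A^6*B^2*C^0 + (9)*A^7*B^0*C^1 + (9)*A^7*B^1*C^0 + (17)*A^8*B^0*C^0::real)" by algebra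

lemma Hdiff: "Hnorm 3 [4,4] (vec3 A B C) - Hnorm 3 [5,2,1] (vec3 A B C) = ((17)*A^0*B^0*C^8 + (9)*A^0*B^1*C^7 + (1)*A^0*B^2*C^6 + (18)*A^0*B^3*C^5 + (60)*A^0*B^4*C^4 + (18)*A^0*B^5*C^3 + (1)*A^0*B^6*C^2 + (9)*A^0*B^7*C^1 + (17)*A^0*B^8*C^0 + (9)*A^1*B^0*C^7 + (-32)*A^1*B^1*C^6 + (-48)*A^1*B^2*C^5 + (11)*A^1*B^3*C^4 + (11)*A^1*B^4*C^3 + (-48)*A^1*B^5*C^2 + (-32)*A^1*B^6*C^1 + (9)*A^1*B^7*C^0 + (1)*A^2*B^0*C^6 + (-48)*A^2*B^1*C^5 + (-22)*A^2*B^2*C^4 + (-5)*A^2*B^3*C^3 + (-22)*A^2*B^4*C^2 + (-48)*A^2*B^5*C^1 + (1)*A^2*B^6*C^0 + (18)*A^3*B^0*C^5 + (11)*A^3*B^1*C^4 + (-5)*A^3*B^2*C^3 + (-5)*A^3*B^3*C^2 + (11)*A^3*B^4*C^1 + (18)*A^3*B^5*C^0 + (60)*A^4*B^0*C^4 + (11)*A^4*B^1*C^3 + (-22)*A^4*B^2*C^2 + (11)*A^4*B^3*C^1 + (60)*A^4*B^4*C^0 + (18)*A^5*B^0*C^3 + (-48)*A^5*B^1*C^2 + (-48)*A^5*B^2*C^1 + (18)*A^5*B^3*C^0 + (1)*A^6*B^0*C^2 + (-32)*A^6*B^1*C^1 + (1)*A^6*B^2*C^0 + (9)*A^7*B^0*C^1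 + (9)*A^7*B^1*C^0 + (17)*A^8*B^0*C^0) / 9450"
proof -
  have "Hnorm 3 [4,4] (vec3 A B C) - Hnorm 3 [5,2,1] (vec3 A B C)
     = (hcomp 3 4 (vec3 A B C))^2 / 225 - (hcomp 3 5 (vec3 A B C) * hcomp 3 2 (vec3 A B C) * hcomp 3 1 (vec3 A B C)) / 378"
    unfolding Hnorm_def hpart_def by (simp add: one1 one1s one2 one4 one5 power2_eq_square)
  also have "\<dots> = (42 * (hcomp 3 4 (vec3 A B C))^2 - 25 * (hcomp 3 5 (vec3 A B C) * hcomp 3 2 (vec3 A B C) * hcomp 3 1 (vec3 A B C))) / 9450"
    by (simp add: field_simps)
  also have "\<dots> = ((17)*A^0*B^0*C^8 + (9)*A^0*B^1*C^7 + (1)*A^0*B^2*C^6 + (18)*A^0*B^3*C^5 + (60)*A^0*B^4*C^4 + (18)*A^0*B^5*C^3 + (1)*A^0*B^6*C^2 + (9)*A^0*B^7*C^1 + (17)*A^0*B^8*C^0 + (9)*A^1*B^0*C^7 + (-32)*A^1*B^1*C^6 + (-48)*A^1*B^2*C^5 + (11)*A^1*B^3*C^4 + (11)*A^1*B^4*C^3 + (-48)*A^1*B^5*C^2 + (-32)*A^1*B^6*C^1 + (9)*A^1*B^7*C^0 + (1)*A^2*B^0*C^6 + (-48)*A^2*B^1*C^5 + (-22)*A^2*B^2*C^4 + (-5)*A^2*B^3*C^3 + (-22)*A^2*B^4*C^2 + (-48)*A^2*B^5*C^1 + (1)*A^2*B^6*C^0 + (18)*A^3*B^0*C^5 + (11)*A^3*B^1*C^4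 + (-5)*A^3*B^2*C^3 + (-5)*A^3*B^3*C^2 + (11)*A^3*B^4*C^1 + (18)*A^3*B^5*C^0 + (60)*A^4*B^0*C^4 + (11)*A^4*B^1*C^3 + (-22)*A^4*B^2*C^2 + (11)*A^4*B^3*C^1 + (60)*A^4*B^4*C^0 + (18)*A^5*B^0*C^3 + (-48)*A^5*B^1*C^2 + (-48)*A^5*B^2*C^1 + (18)*A^5*B^3*C^0 + (1)*A^6*B^0*C^2 + (-32)*A^6*B^1*C^1 + (1)*A^6*B^2*C^0 + (9)*A^7*B^0*C^1 + (9)*A^7*B^1*C^0 + (17)*A^8*B^0*C^0) / 9450"
    unfolding h1 h2 h4 h5 e1 ..
  finally show ?thesis .
qed

definition z0_0 :: "real \<Rightarrow> real \<Rightarrow> real \<Rightarrow> real" where "z0_0 a b e = a^0*b^0*e^8 - a^8*b^0*e^0"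
definition z0_1 :: "real \<Rightarrow> real \<Rightarrow> real \<Rightarrow> real" where "z0_1 a b e = a^0*b^2*e^6 - a^8*b^0*e^0"
definition z0_2 :: "real \<Rightarrow> real \<Rightarrow> real \<Rightarrow> real" where "z0_2 a b e = a^0*b^4*e^4 - a^8*b^0*e^0"
definition z0_3 :: "real \<Rightarrow> real \<Rightarrow> real \<Rightarrow> real" where "z0_3 a b e = a^0*b^6*e^2 - a^8*b^0*e^0"
definition z0_4 :: "real \<Rightarrow> real \<Rightarrow> real \<Rightarrow> real" where "z0_4 a b e = a^0*b^8*e^0 - a^8*b^0*e^0"
definition z0_5 :: "real \<Rightarrow> real \<Rightarrow> real \<Rightarrow> real" where "z0_5 a b e = a^2*b^0*e^6 - a^8*b^0*e^0"
definition z0_6 :: "real \<Rightarrow> real \<Rightarrow> real \<Rightarrow> real" where "z0_6 a b e = a^2*b^2*e^4 - a^8*b^0*e^0"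
definition z0_7 :: "real \<Rightarrow> real \<Rightarrow> real \<Rightarrow> real" where "z0_7 a b e = a^2*b^4*e^2 - a^8*b^0*e^0"
definition z0_8 :: "real \<Rightarrow> real \<Rightarrow> real \<Rightarrow> real" where "z0_8 a b e = a^2*b^6*e^0 - a^8*b^0*e^0"
definition z0_9 :: "real \<Rightarrow> real \<Rightarrow> real \<Rightarrow> real" where "z0_9 a b e = a^4*b^0*e^4 - a^8*b^0*e^0"
definition z0_10 :: "real \<Rightarrow> real \<Rightarrow> real \<Rightarrow> real" where "z0_10 a b e = a^4*b^2*e^2 - a^8*b^0*e^0"
definition z0_11 :: "real \<Rightarrow> real \<Rightarrow> real \<Rightarrow> real" where "z0_11 a b e = a^4*b^4*e^0 - a^8*b^0*e^0"
definition z0_12 :: "real \<Rightarrow> real \<Rightarrow> real \<Rightarrow> real" where "z0_12 a b e = a^6*b^0*e^2 - a^8*b^0*e^0"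
definition z0_13 :: "real \<Rightarrow> real \<Rightarrow> real \<Rightarrow> real" where "z0_13 a b e = a^6*b^2*e^0 - a^8*b^0*e^0"
definition z1_0 :: "real \<Rightarrow> real \<Rightarrow> real \<Rightarrow> real" where "z1_0 a b e = a^1*b^1*e^6 - a^7*b^1*e^0"
definition z1_1 :: "real \<Rightarrow> real \<Rightarrow> real \<Rightarrow> real" where "z1_1 a b e = a^1*b^3*e^4 - a^7*b^1*e^0"
definition z1_2 :: "real \<Rightarrow> real \<Rightarrow> real \<Rightarrow> real" where "z1_2 a b e = a^1*b^5*e^2 - a^7*b^1*e^0"
definition z1_3 :: "real \<Rightarrow> real \<Rightarrow> real \<Rightarrow> real" where "z1_3 a b e = a^1*b^7*e^0 - a^7*b^1*e^0"
definition z1_4 :: "real \<Rightarrow> real \<Rightarrow> real \<Rightarrow> real" where "z1_4 a b e = a^3*b^1*e^4 - a^7*b^1*e^0"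
definition z1_5 :: "real \<Rightarrow> real \<Rightarrow> real \<Rightarrow> real" where "z1_5 a b e = a^3*b^3*e^2 - a^7*b^1*e^0"
definition z1_6 :: "real \<Rightarrow> real \<Rightarrow> real \<Rightarrow> real" where "z1_6 a b e = a^3*b^5*e^0 - a^7*b^1*e^0"
definition z1_7 :: "real \<Rightarrow> real \<Rightarrow> real \<Rightarrow> real" where "z1_7 a b e = a^5*b^1*e^2 - a^7*b^1*e^0"
definition z1_8 :: "real \<Rightarrow> real \<Rightarrow> real \<Rightarrow> real" where "z1_8 a b e = a^5*b^3*e^0 - a^7*b^1*e^0"
definition z2_0 :: "real \<Rightarrow> real \<Rightarrow> real \<Rightarrow> real" where "z2_0 a b e = a^1*b^0*e^7 - a^7*b^0*e^1"
definition z2_1 :: "real \<Rightarrow> real \<Rightarrow> real \<Rightarrow> real" where "z2_1 a b e = a^1*b^2*e^5 - a^7*b^0*e^1"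
definition z2_2 :: "real \<Rightarrow> real \<Rightarrow> real \<Rightarrow> real" where "z2_2 a b e = a^1*b^4*e^3 - a^7*b^0*e^1"
definition z2_3 :: "real \<Rightarrow> real \<Rightarrow> real \<Rightarrow> real" where "z2_3 a b e = a^1*b^6*e^1 - a^7*b^0*e^1"
definition z2_4 :: "real \<Rightarrow> real \<Rightarrow> real \<Rightarrow> real" where "z2_4 a b e = a^3*b^0*e^5 - a^7*b^0*e^1"
definition z2_5 :: "real \<Rightarrow> real \<Rightarrow> real \<Rightarrow> real" where "z2_5 a b e = a^3*b^2*e^3 - a^7*b^0*e^1"
definition z2_6 :: "real \<Rightarrow> real \<Rightarrow> real \<Rightarrow> real" where "z2_6 a b e = a^3*b^4*e^1 - a^7*b^0*e^1"
definition z2_7 :: "real \<Rightarrow> real \<Rightarrow> real \<Rightarrow> real" where "z2_7 a b e = a^5*b^0*e^3 - a^7*b^0*e^1"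
definition z2_8 :: "real \<Rightarrow> real \<Rightarrow> real \<Rightarrow> real" where "z2_8 a b e = a^5*b^2*e^1 - a^7*b^0*e^1"
definition z3_0 :: "real \<Rightarrow> real \<Rightarrow> real \<Rightarrow> real" where "z3_0 a b e = a^0*b^1*e^7 - a^6*b^1*e^1"
definition z3_1 :: "real \<Rightarrow> real \<Rightarrow> real \<Rightarrow> real" where "z3_1 a b e = a^0*b^3*e^5 - a^6*b^1*e^1"
definition z3_2 :: "real \<Rightarrow> real \<Rightarrow> real \<Rightarrow> real" where "z3_2 a b e = a^0*b^5*e^3 - a^6*b^1*e^1"
definition z3_3 :: "real \<Rightarrow> real \<Rightarrow> real \<Rightarrow> real" where "z3_3 a b e = a^0*b^7*e^1 - a^6*b^1*e^1"
definition z3_4 :: "real \<Rightarrow> real \<Rightarrow> real \<Rightarrow> real" where "z3_4 a b e = a^2*b^1*e^5 - a^6*b^1*e^1"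
definition z3_5 :: "real \<Rightarrow> real \<Rightarrow> real \<Rightarrow> real" where "z3_5 a b e = a^2*b^3*e^3 - a^6*b^1*e^1"
definition z3_6 :: "real \<Rightarrow> real \<Rightarrow> real \<Rightarrow> real" where "z3_6 a b e = a^2*b^5*e^1 - a^6*b^1*e^1"
definition z3_7 :: "real \<Rightarrow> real \<Rightarrow> real \<Rightarrow> real" where "z3_7 a b e = a^4*b^1*e^3 - a^6*b^1*e^1"
definition z3_8 :: "real \<Rightarrow> real \<Rightarrow> real \<Rightarrow> real" where "z3_8 a b e = a^4*b^3*e^1 - a^6*b^1*e^1"

definition sq0 :: "real \<Rightarrow> real \<Rightarrow> real \<Rightarrow> real" where "sq0 a b e = (68)*z0_0 a b e + (-195)*z0_1 a b e + (154)*z0_2 a b e + (-21)*z0_3 a b e + (5)*z0_4 a b e + (-161)*z0_5 a b e + (314)*z0_6 a b e + (-158)*z0_7 a b e + (17)*z0_8 a b e + (85)*z0_9 a b e + (-103)*z0_10 a b e + (-15)*z0_11 a b e + (-6)*z0_12 a b e + (18)*z0_13 a b e"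
definition sq1 :: "real \<Rightarrow> real \<Rightarrow> real \<Rightarrow> real" where "sq1 a b e = (77575)*z0_1 a b e + (-133510)*z0_2 a b e + (49081)*z0_3 a b e + (-793)*z0_4 a b e + (-32891)*z0_5 a b e + (-8810)*z0_6 a b e + (59018)*z0_7 a b e + (-12325)*z0_8 a b e + (38131)*z0_9 a b e + (-30829)*z0_10 a b e + (-681)*z0_11 a b e + (-7766)*z0_12 a b e + (4190)*z0_13 a b e"
definition sq2 :: "real \<Rightarrow> real \<Rightarrow> real \<Rightarrow> real" where "sq2 a b e = (20637550)*z0_2 a b e + (-17225171)*z0_3 a b e + (1886718)*z0_4 a b e + (-835269)*z0_5 a b e + (-27090650)*z0_6 a b e + (16128432)*z0_7 a b e + (1017175)*z0_8 a b e + (6649349)*z0_9 a b e + (5880169)*z0_10 a b e + (-4999944)*z0_11 a b e + (-2869734)*z0_12 a b e + (935275)*z0_13 a b e"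
definition sq3 :: "real \<Rightarrow> real \<Rightarrow> real \<Rightarrow> real" where "sq3 a b e = (32215044813)*z0_3 a b e + (-8727502004)*z0_4 a b e + (-2128563993)*z0_5 a b e + (3875779850)*z0_6 a b e + (-78243311946)*z0_7 a b e + (16163910975)*z0_8 a b e + (6725770203)*z0_9 a b e + (41622327093)*z0_10 a b e + (4408657382)*z0_11 a b e + (-7839938748)*z0_12 a b e + (-8163350925)*z0_13 a b e"
definition sq4 :: "real \<Rightarrow> real \<Rightarrow> real \<Rightarrow> real" where "sq4 a b e = (1078628522242)*z0_4 a b e + (973768404261)*z0_5 a b e + (-534971170126)*z0_6 a b e + (967415878281)*z0_7 a b e + (-4112540367144)*z0_8 a b e + (-1032193380534)*z0_9 a b e + (-593803399341)*z0_10 a b e + (4318016271497)*z0_11 a b e + (373700857083)*z0_12 a b e + (-1244697955824)*z0_13 a b e"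
definition sq5 :: "real \<Rightarrow> real \<Rightarrow> real \<Rightarrow> real" where "sq5 a b e = (626573462163579)*z0_5 a b e + (-514168133694298)*z0_6 a b e + (121625371825375)*z0_7 a b e + (-11159545041116)*z0_8 a b e + (-845018522849828)*z0_9 a b e + (524796784877353)*z0_10 a b e + (24821763727011)*z0_11 a b e + (192420087666337)*z0_12 a b e + (-117746843530360)*z0_13 a b e"
definition sq6 :: "real \<Rightarrow> real \<Rightarrow> real \<Rightarrow> real" where "sq6 a b e = (477869923485243193)*z0_6 a b e + (-338539523947765354)*z0_7 a b e + (16392787567147370)*z0_8 a b e + (-209538984561944215)*z0_9 a b e + (-135583252036486642)*z0_10 a b e + (111316011451926636)*z0_11 a b e + (121937059130010878)*z0_12 a b e + (-25756398126720440)*z0_13 a b e"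
definition sq7 :: "real \<Rightarrow> real \<Rightarrow> real \<Rightarrow> real" where "sq7 a b e = (566833273047746558136)*z0_7 a b e + (-216863024882344297188)*z0_8 a b e + (-31902847695504387961)*z0_9 a b e + (-616174376367973160622)*z0_10 a b e + (106766843509797715737)*z0_11 a b e + (131733445204797722478)*z0_12 a b e + (99057839770717411389)*z0_13 a b e"
definition sq8 :: "real \<Rightarrow> real \<Rightarrow> real \<Rightarrow> real" where "sq8 a b e = (19215243090393530325000)*z0_8 a b e + (3273435847979458929385)*z0_9 a b e + (2672115504334260212010)*z0_10 a b e + (-32434409396594135668005)*z0_11 a b e + (-1884035463343799311998)*z0_12 a b e + (11567254252581328115523)*z0_13 a b e"
definition sq9 :: "real \<Rightarrow> real \<Rightarrow> real \<Rightarrow> real" where "sq9 a b e = (1832204751056497674461945)*z0_9 a b e + (-1446346605548244118798430)*z0_10 a b e + (-174953240557394675812285)*z0_11 a b e + (-755091038365099728717486)*z0_12 a b e + (614976633867021886653411)*z0_13 a b e"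
definition sq10 :: "real \<Rightarrow> real \<Rightarrow> real \<Rightarrow> real" where "sq10 a b e = (1649826783230251223927845660)*z0_10 a b e + (-1178276204607808732347309265)*z0_11 a b e + (-563677075785086271769246032)*z0_12 a b e + (253211477420954349299409117)*z0_13 a b e"
definition sq11 :: "real \<Rightarrow> real \<Rightarrow> real \<Rightarrow> real" where "sq11 a b e = (168350615189599290759978001565)*z0_11 a b e + (5311596015897872594316339464)*z0_12 a b e + (-97444565940915523167619898849)*z0_13 a b e"
definition sq12 :: "real \<Rightarrow> real \<Rightarrow> real \<Rightarrow> real" where "sq12 a b e = (13512334220654780076818703015756)*z0_12 a b e + (-8759478416903673278552904304171)*z0_13 a b e"
definition sq13 :: "real \<Rightarrow> real \<Rightarrow> real \<Rightarrow> real" where "sq13 a b e = (1)*z0_13 a b e"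
definition sq14 :: "real \<Rightarrow> real \<Rightarrow> real \<Rightarrow> real" where "sq14 a b e = (544)*z1_0 a b e + (-736)*z1_1 a b e + (96)*z1_2 a b e + (-5)*z1_3 a b e + (-575)*z1_4 a b e + (783)*z1_5 a b e + (-13)*z1_6 a b e + (7)*z1_7 a b e + (-118)*z1_8 a b e"
definition sq15 :: "real \<Rightarrow> real \<Rightarrow> real \<Rightarrow> real" where "sq15 a b e = (21628)*z1_1 a b e + (-16101)*z1_2 a b e + (633)*z1_3 a b e + (-16863)*z1_4 a b e + (2828)*z1_5 a b e + (4801)*z1_6 a b e + (6893)*z1_7 a b e + (-3513)*z1_8 a b e"
definition sq16 :: "real \<Rightarrow> real \<Rightarrow> real \<Rightarrow> real" where "sq16 a b e = (14317207)*z1_2 a b e + (-4463971)*z1_3 a b e + (1687381)*z1_4 a b e + (-23041060)*z1_5 a b e + (4120913)*z1_6 a b e + (5896181)*z1_7 a b e + (3027591)*z1_8 a b e"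
definition sq17 :: "real \<Rightarrow> real \<Rightarrow> real \<Rightarrow> real" where "sq17 a b e = (52005302481)*z1_3 a b e + (7363497347)*z1_4 a b e + (28481640557)*z1_5 a b e + (-132853445479)*z1_6 a b e + (-21442868107)*z1_7 a b e + (78164827518)*z1_8 a b e"
definition sq18 :: "real \<Rightarrow> real \<Rightarrow> real \<Rightarrow> real" where "sq18 a b e = (12708138553696)*z1_4 a b e + (-14089436056472)*z1_5 a b e + (1718951283430)*z1_6 a b e + (-2910490314995)*z1_7 a b e + (3146393870073)*z1_8 a b e"
definition sq19 :: "real \<Rightarrow> real \<Rightarrow> real \<Rightarrow> real" where "sq19 a b e = (364338614098784)*z1_5 a b e + (-246416408392238)*z1_6 a b e + (-233159015627601)*z1_7 a b e + (99733100355403)*z1_8 a b e"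
definition sq20 :: "real \<Rightarrow> real \<Rightarrow> real \<Rightarrow> real" where "sq20 a b e = (75046210424253714)*z1_6 a b e + (9055913319657071)*z1_7 a b e + (-99187000658641557)*z1_8 a b e"
definition sq21 :: "real \<Rightarrow> real \<Rightarrow> real \<Rightarrow> real" where "sq21 a b e = (1683548638269185389)*z1_7 a b e + (-1218168145760596335)*z1_8 a b e"
definition sq22 :: "real \<Rightarrow> real \<Rightarrow> real \<Rightarrow> real" where "sq22 a b e = (1)*z1_8 a b e"
definition sq23 :: "real \<Rightarrow> real \<Rightarrow> real \<Rightarrow> real" where "sq23 a b e = (179)*z2_0 a b e + (-235)*z2_1 a b e + (44)*z2_2 a b e + (-5)*z2_3 a b e + (-341)*z2_4 a b e + (392)*z2_5 a b e + (-32)*z2_6 a b e + (122)*z2_7 a b e + (-120)*z2_8 a b e"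
definition sq24 :: "real \<Rightarrow> real \<Rightarrow> real \<Rightarrow> real" where "sq24 a b e = (192511)*z2_1 a b e + (-182622)*z2_2 a b e + (16009)*z2_3 a b e + (-84252)*z2_4 a b e + (-96009)*z2_5 a b e + (120644)*z2_6 a b e + (77716)*z2_7 a b e + (-33391)*z2_8 a b e"
definition sq25 :: "real \<Rightarrow> real \<Rightarrow> real \<Rightarrow> real" where "sq25 a b e = (22565048)*z2_2 a b e + (-11374414)*z2_3 a b e + (-1097000)*z2_4 a b e + (-26219447)*z2_5 a b e + (7582010)*z2_6 a b e + (5860669)*z2_7 a b e + (4349658)*z2_8 a b e"
definition sq26 :: "real \<Rightarrow> real \<Rightarrow> real \<Rightarrow> real" where "sq26 a b e = (25915142002)*z2_3 a b e + (-1859147704)*z2_4 a b e + (10346609289)*z2_5 a b e + (-51326169666)*z2_6 a b e + (2246938557)*z2_7 a b e + (17926324578)*z2_8 a b e"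
definition sq27 :: "real \<Rightarrow> real \<Rightarrow> real \<Rightarrow> real" where "sq27 a b e = (2737556382044)*z2_4 a b e + (-2498476544840)*z2_5 a b e + (419845867943)*z2_6 a b e + (-2189768490817)*z2_7 a b e + (1350203362888)*z2_8 a b e"
definition sq28 :: "real \<Rightarrow> real \<Rightarrow> real \<Rightarrow> real" where "sq28 a b e = (479053308948362)*z2_5 a b e + (-329477943829509)*z2_6 a b e + (-213530371984526)*z2_7 a b e + (13664229926372)*z2_8 a b e"
definition sq29 :: "real \<Rightarrow> real \<Rightarrow> real \<Rightarrow> real" where "sq29 a b e = (69684005603978566)*z2_6 a b e + (-20421711835639739)*z2_7 a b e + (-62373941876519104)*z2_8 a b e"
definition sq30 :: "real \<Rightarrow> real \<Rightarrow> real \<Rightarrow> real" where "sq30 a b e = (14514301123114732249)*z2_7 a b e + (-9549127222636189248)*z2_8 a b e"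
definition sq31 :: "real \<Rightarrow> real \<Rightarrow> real \<Rightarrow> real" where "sq31 a b e = (1)*z2_8 a b e"
definition sq32 :: "real \<Rightarrow> real \<Rightarrow> real \<Rightarrow> real" where "sq32 a b e = (213)*z3_0 a b e + (-501)*z3_1 a b e + (270)*z3_2 a b e + (-25)*z3_3 a b e + (-215)*z3_4 a b e + (463)*z3_5 a b e + (-165)*z3_6 a b e + (-7)*z3_7 a b e + (-38)*z3_8 a b e"
definition sq33 :: "real \<Rightarrow> real \<Rightarrow> real \<Rightarrow> real" where "sq33 a b e = (52795)*z3_1 a b e + (-66593)*z3_2 a b e + (14995)*z3_3 a b e + (-44709)*z3_4 a b e + (30319)*z3_5 a b e + (10998)*z3_6 a b e + (24746)*z3_7 a b e + (-20688)*z3_8 a b e"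
definition sq34 :: "real \<Rightarrow> real \<Rightarrow> real \<Rightarrow> real" where "sq34 a b e = (20943171)*z3_2 a b e + (-10712960)*z3_3 a b e + (1175083)*z3_4 a b e + (-37551458)*z3_5 a b e + (14811104)*z3_6 a b e + (13013878)*z3_7 a b e + (2409371)*z3_8 a b e"
definition sq35 :: "real \<Rightarrow> real \<Rightarrow> real \<Rightarrow> real" where "sq35 a b e = (969335873)*z3_3 a b e + (-20920858)*z3_4 a b e + (674887835)*z3_5 a b e + (-2824365566)*z3_6 a b e + (-245528365)*z3_7 a b e + (1982119969)*z3_8 a b e"
definition sq36 :: "real \<Rightarrow> real \<Rightarrow> real \<Rightarrow> real" where "sq36 a b e = (1385523511991)*z3_4 a b e + (-1469776474153)*z3_5 a b e + (229664164928)*z3_6 a b e + (-977076662967)*z3_7 a b e + (826956911559)*z3_8 a b e"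
definition sq37 :: "real \<Rightarrow> real \<Rightarrow> real \<Rightarrow> real" where "sq37 a b e = (1090999718328749)*z3_5 a b e + (-588306001134588)*z3_6 a b e + (-795607818777570)*z3_7 a b e + (117121008261225)*z3_8 a b e"
definition sq38 :: "real \<Rightarrow> real \<Rightarrow> real \<Rightarrow> real" where "sq38 a b e = (255862560323345787)*z3_6 a b e + (32226227499615657)*z3_7 a b e + (-367454127243729442)*z3_8 a b e"
definition sq39 :: "real \<Rightarrow> real \<Rightarrow> real \<Rightarrow> real" where "sq39 a b e = (11159342575175435142)*z3_7 a b e + (-9334947926812468541)*z3_8 a b e"
definition sq40 :: "real \<Rightarrow> real \<Rightarrow> real \<Rightarrow> real" where "sq40 a b e = (1)*z3_8 a b e"

lemma step1: "((17)*(a^2)^0*(b^2)^0*(e^2)^8 + (9)*(a^2)^0*(b^2)^1*(e^2)^7 + (1)*(a^2)^0*(b^2)^2*(e^2)^6 + (18)*(a^2)^0*(b^2)^3*(e^2)^5 + (60)*(a^2)^0*(b^2)^4*(e^2)^4 + (18)*(a^2)^0*(b^2)^5*(e^2)^3 + (1)*(a^2)^0*(b^2)^6*(e^2)^2 + (9)*(a^2)^0*(b^2)^7*(e^2)^1 + (17)*(a^2)^0*(b^2)^8*(e^2)^0 + (9)*(a^2)^1*(b^2)^0*(e^2)^7 + (-32)*(a^2)^1*(b^2)^1*(e^2)^6 + (-48)*(a^2)^1*(b^2)^2*(e^2)^5 + (11)*(a^2)^1*(b^2)^3*(e^2)^4 + (11)*(a^2)^1*(b^2)^4*(e^2)^3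 + (-48)*(a^2)^1*(b^2)^5*(e^2)^2 + (-32)*(a^2)^1*(b^2)^6*(e^2)^1 + (9)*(a^2)^1*(b^2)^7*(e^2)^0 + (1)*(a^2)^2*(b^2)^0*(e^2)^6 + (-48)*(a^2)^2*(b^2)^1*(e^2)^5 + (-22)*(a^2)^2*(b^2)^2*(e^2)^4 + (-5)*(a^2)^2*(b^2)^3*(e^2)^3 + (-22)*(a^2)^2*(b^2)^4*(e^2)^2 + (-48)*(a^2)^2*(b^2)^5*(e^2)^1 + (1)*(a^2)^2*(b^2)^6*(e^2)^0 + (18)*(a^2)^3*(b^2)^0*(e^2)^5 + (11)*(a^2)^3*(b^2)^1*(e^2)^4 + (-5)*(a^2)^3*(b^2)^2*(e^2)^3 + (-5)*(a^2)^3*(b^2)^3*(e^2)^2 + (11)*(a^2)^3*(b^2)^4*(e^2)^1 + (18)*(a^2)^3*(b^2)^5*(e^2)^0 + (60)*(a^2)^4*(b^2)^0*(e^2)^4 + (11)*(a^2)^4*(b^2)^1*(e^2)^3 + (-22)*(a^2)^4*(b^2)^2*(e^2)^2 + (11)*(a^2)^4*(b^2)^3*(e^2)^1 + (60)*(a^2)^4*(b^2)^4*(e^2)^0 + (18)*(a^2)^5*(b^2)^0*(e^2)^3 + (-48)*(a^2)^5*(b^2)^1*(e^2)^2 + (-48)*(a^2)^5*(b^2)^2*(e^2)^1 + (18)*(a^2)^5*(b^2)^3*(e^2)^0 + (1)*(a^2)^6*(b^2)^0*(e^2)^2 + (-32)*(a^2)^6*(b^2)^1*(e^2)^1 + (1)*(a^2)^6*(b^2)^2*(e^2)^0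 + (9)*(a^2)^7*(b^2)^0*(e^2)^1 + (9)*(a^2)^7*(b^2)^1*(e^2)^0 + (17)*(a^2)^8*(b^2)^0*(e^2)^0) = ((17)*z0_0 a b e*z0_0 a b e + (-195/2)*z0_0 a b e*z0_1 a b e + (77)*z0_0 a b e*z0_2 a b e + (-21/2)*z0_0 a b e*z0_3 a b e + (5/2)*z0_0 a b e*z0_4 a b e + (-161/2)*z0_0 a b e*z0_5 a b e + (157)*z0_0 a b e*z0_6 a b e + (-79)*z0_0 a b e*z0_7 a b e + (17/2)*z0_0 a b e*z0_8 a b e + (85/2)*z0_0 a b e*z0_9 a b e + (-103/2)*z0_0 a b e*z0_10 a b e + (-15/2)*z0_0 a b e*z0_11 a b e + (-3)*z0_0 a b e*z0_12 a b e + (9)*z0_0 a b e*z0_13 a b e + (425)*z0_1 a b e*z0_1 a b e + (-2405/2)*z0_1 a b e*z0_2 a b e + (391)*z0_1 a b e*z0_3 a b e + (-13)*z0_1 a b e*z0_4 a b e + (-11)*z0_1 a b e*z0_5 a b e + (-515)*z0_1 a b e*z0_6 a b e + (1321/2)*z0_1 a b e*z0_7 a b e + (-115)*z0_1 a b e*z0_8 a b e + (317/2)*z0_1 a b e*z0_9 a b e + (-79)*z0_1 a b e*z0_10 a b e + (33/2)*z0_1 a b e*z0_11 a b e + (-97/2)*z0_1 a b e*z0_12 a b e + (5)*z0_1 a b e*z0_13 a b e + (2529/2)*z0_2 a b e*z0_2 a b e + (-1200)*z0_2 a b e*z0_3 a b e + (153/2)*z0_2 a b e*z0_4 a b e + (207)*z0_2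 a b e*z0_5 a b e + (-406)*z0_2 a b e*z0_6 a b e + (-406)*z0_2 a b e*z0_7 a b e + (208)*z0_2 a b e*z0_8 a b e + (-172)*z0_2 a b e*z0_9 a b e + (463)*z0_2 a b e*z0_10 a b e + (-339/2)*z0_2 a b e*z0_11 a b e + (-1)*z0_2 a b e*z0_12 a b e + (-5/2)*z0_2 a b e*z0_13 a b e + (851/2)*z0_3 a b e*z0_3 a b e + (-195/2)*z0_3 a b e*z0_4 a b e + (-116)*z0_3 a b e*z0_5 a b e + (658)*z0_3 a b e*z0_6 a b e + (-514)*z0_3 a b e*z0_7 a b e + (-9)*z0_3 a b e*z0_8 a b e + (18)*z0_3 a b e*z0_9 a b e + (-84)*z0_3 a b e*z0_10 a b e + (155)*z0_3 a b e*z0_11 a b e + (4)*z0_3 a b e*z0_12 a b e + (-48)*z0_3 a b e*z0_13 a b e + (17)*z0_4 a b e*z0_4 a b e + (12)*z0_4 a b e*z0_5 a b e + (-81)*z0_4 a b e*z0_6 a b e + (155)*z0_4 a b e*z0_7 a b e + (-161/2)*z0_4 a b e*z0_8 a b e + (-5)*z0_4 a b e*z0_9 a b e + (-48)*z0_4 a b e*z0_10 a b e + (46)*z0_4 a b e*z0_11 a b e + (8)*z0_4 a b e*z0_12 a b e + (-11/2)*z0_4 a b e*z0_13 a b e + (599/2)*z0_5 a b e*z0_5 a b e + (-556)*z0_5 a b e*z0_6 a b e + (77)*z0_5 a b e*z0_7 a b e + (-51)*z0_5 a b e*z0_8 a b e + (-1273/2)*z0_5 a b e*z0_9 a b e + (432)*z0_5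 a b e*z0_10 a b e + (97)*z0_5 a b e*z0_11 a b e + (132)*z0_5 a b e*z0_12 a b e + (-105)*z0_5 a b e*z0_13 a b e + (2843/2)*z0_6 a b e*z0_6 a b e + (-1736)*z0_6 a b e*z0_7 a b e + (78)*z0_6 a b e*z0_8 a b e + (-118)*z0_6 a b e*z0_9 a b e + (-848)*z0_6 a b e*z0_10 a b e + (315)*z0_6 a b e*z0_11 a b e + (228)*z0_6 a b e*z0_12 a b e + (7)*z0_6 a b e*z0_13 a b e + (2841/2)*z0_7 a b e*z0_7 a b e + (-557)*z0_7 a b e*z0_8 a b e + (316)*z0_7 a b e*z0_9 a b e + (-847)*z0_7 a b e*z0_10 a b e + (-116)*z0_7 a b e*z0_11 a b e + (6)*z0_7 a b e*z0_12 a b e + (227)*z0_7 a b e*z0_13 a b e + (296)*z0_8 a b e*z0_8 a b e + (97)*z0_8 a b e*z0_9 a b e + (432)*z0_8 a b e*z0_10 a b e + (-634)*z0_8 a b e*z0_11 a b e + (-105)*z0_8 a b e*z0_12 a b e + (135)*z0_8 a b e*z0_13 a b e + (542)*z0_9 a b e*z0_9 a b e + (-350)*z0_9 a b e*z0_10 a b e + (-293)*z0_9 a b e*z0_11 a b e + (-341)*z0_9 a b e*z0_12 a b e + (193)*z0_9 a b e*z0_13 a b e + (841)*z0_10 a b e*z0_10 a b e + (-350)*z0_10 a b e*z0_11 a b e + (-197)*z0_10 a b e*z0_12 a b e + (-196)*z0_10 a b e*z0_13 a b e + (1083/2)*z0_11 a b e*z0_11 a b e + (193)*z0_11 a b e*z0_12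 a b e + (-341)*z0_11 a b e*z0_13 a b e + (195/2)*z0_12 a b e*z0_12 a b e + (-56)*z0_12 a b e*z0_13 a b e + (195/2)*z0_13 a b e*z0_13 a b e) + ((272)*z1_0 a b e*z1_0 a b e + (-736)*z1_0 a b e*z1_1 a b e + (96)*z1_0 a b e*z1_2 a b e + (-5)*z1_0 a b e*z1_3 a b e + (-575)*z1_0 a b e*z1_4 a b e + (783)*z1_0 a b e*z1_5 a b e + (-13)*z1_0 a b e*z1_6 a b e + (7)*z1_0 a b e*z1_7 a b e + (-118)*z1_0 a b e*z1_8 a b e + (1134)*z1_1 a b e*z1_1 a b e + (-1077)*z1_1 a b e*z1_2 a b e + (44)*z1_1 a b e*z1_3 a b e + (-214)*z1_1 a b e*z1_4 a b e + (-893)*z1_1 a b e*z1_5 a b e + (300)*z1_1 a b e*z1_6 a b e + (396)*z1_1 a b e*z1_7 a b e + (-47)*z1_1 a b e*z1_8 a b e + (692)*z1_2 a b e*z1_2 a b e + (-235)*z1_2 a b e*z1_3 a b e + (715)*z1_2 a b e*z1_4 a b e + (-1051)*z1_2 a b e*z1_5 a b e + (-22)*z1_2 a b e*z1_6 a b e + (-28)*z1_2 a b e*z1_7 a b e + (273)*z1_2 a b e*z1_8 a b e + (179/2)*z1_3 a b e*z1_3 a b e + (-32)*z1_3 a b e*z1_4 a b e + (392)*z1_3 a b e*z1_5 a b e + (-341)*z1_3 a b e*z1_6 a b e + (-120)*z1_3 a b e*z1_7 a b e + (122)*z1_3 a b e*z1_8 a b e + (1637/2)*z1_4 a b e*z1_4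 a b e + (-1345)*z1_4 a b e*z1_5 a b e + (-192)*z1_4 a b e*z1_6 a b e + (-354)*z1_4 a b e*z1_7 a b e + (387)*z1_4 a b e*z1_8 a b e + (3427/2)*z1_5 a b e*z1_5 a b e + (-639)*z1_5 a b e*z1_6 a b e + (-486)*z1_5 a b e*z1_7 a b e + (-333)*z1_5 a b e*z1_8 a b e + (1071/2)*z1_6 a b e*z1_6 a b e + (392)*z1_6 a b e*z1_7 a b e + (-609)*z1_6 a b e*z1_8 a b e + (207)*z1_7 a b e*z1_7 a b e + (-183)*z1_7 a b e*z1_8 a b e + (305)*z1_8 a b e*z1_8 a b e) + ((179/2)*z2_0 a b e*z2_0 a b e + (-235)*z2_0 a b e*z2_1 a b e + (44)*z2_0 a b e*z2_2 a b e + (-5)*z2_0 a b e*z2_3 a b e + (-341)*z2_0 a b e*z2_4 a b e + (392)*z2_0 a b e*z2_5 a b e + (-32)*z2_0 a b e*z2_6 a b e + (122)*z2_0 a b e*z2_7 a b e + (-120)*z2_0 a b e*z2_8 a b e + (692)*z2_1 a b e*z2_1 a b e + (-1078)*z2_1 a b e*z2_2 a b e + (96)*z2_1 a b e*z2_3 a b e + (-23)*z2_1 a b e*z2_4 a b e + (-1051)*z2_1 a b e*z2_5 a b e + (716)*z2_1 a b e*z2_6 a b e + (274)*z2_1 a b e*z2_7 a b e + (-29)*z2_1 a b e*z2_8 a b e + (1134)*z2_2 a b e*z2_2 a b e + (-736)*z2_2 a b e*z2_3 a b e + (300)*z2_2 a b e*z2_4 a b e + (-893)*z2_2 a b e*z2_5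 a b e + (-214)*z2_2 a b e*z2_6 a b e + (-47)*z2_2 a b e*z2_7 a b e + (396)*z2_2 a b e*z2_8 a b e + (272)*z2_3 a b e*z2_3 a b e + (-13)*z2_3 a b e*z2_4 a b e + (783)*z2_3 a b e*z2_5 a b e + (-575)*z2_3 a b e*z2_6 a b e + (-118)*z2_3 a b e*z2_7 a b e + (7)*z2_3 a b e*z2_8 a b e + (1071/2)*z2_4 a b e*z2_4 a b e + (-638)*z2_4 a b e*z2_5 a b e + (-193)*z2_4 a b e*z2_6 a b e + (-609)*z2_4 a b e*z2_7 a b e + (392)*z2_4 a b e*z2_8 a b e + (1713)*z2_5 a b e*z2_5 a b e + (-1345)*z2_5 a b e*z2_6 a b e + (-333)*z2_5 a b e*z2_7 a b e + (-486)*z2_5 a b e*z2_8 a b e + (818)*z2_6 a b e*z2_6 a b e + (387)*z2_6 a b e*z2_7 a b e + (-354)*z2_6 a b e*z2_8 a b e + (305)*z2_7 a b e*z2_7 a b e + (-183)*z2_7 a b e*z2_8 a b e + (413/2)*z2_8 a b e*z2_8 a b e) + ((213/2)*z3_0 a b e*z3_0 a b e + (-501)*z3_0 a b e*z3_1 a b e + (270)*z3_0 a b e*z3_2 a b e + (-25)*z3_0 a b e*z3_3 a b e + (-215)*z3_0 a b e*z3_4 a b e + (463)*z3_0 a b e*z3_5 a b e + (-165)*z3_0 a b e*z3_6 a b e + (-7)*z3_0 a b e*z3_7 a b e + (-38)*z3_0 a b e*z3_8 a b e + (961)*z3_1 a b e*z3_1 a b e + (-1573)*z3_1 a b e*z3_2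 a b e + (270)*z3_1 a b e*z3_3 a b e + (-124)*z3_1 a b e*z3_4 a b e + (-662)*z3_1 a b e*z3_5 a b e + (543)*z3_1 a b e*z3_6 a b e + (365)*z3_1 a b e*z3_7 a b e + (-202)*z3_1 a b e*z3_8 a b e + (961)*z3_2 a b e*z3_2 a b e + (-501)*z3_2 a b e*z3_3 a b e + (544)*z3_2 a b e*z3_4 a b e + (-663)*z3_2 a b e*z3_5 a b e + (-124)*z3_2 a b e*z3_6 a b e + (-202)*z3_2 a b e*z3_7 a b e + (365)*z3_2 a b e*z3_8 a b e + (213/2)*z3_3 a b e*z3_3 a b e + (-166)*z3_3 a b e*z3_4 a b e + (463)*z3_3 a b e*z3_5 a b e + (-215)*z3_3 a b e*z3_6 a b e + (-38)*z3_3 a b e*z3_7 a b e + (-7)*z3_3 a b e*z3_8 a b e + (614)*z3_4 a b e*z3_4 a b e + (-1375)*z3_4 a b e*z3_5 a b e + (133)*z3_4 a b e*z3_6 a b e + (-610)*z3_4 a b e*z3_7 a b e + (570)*z3_4 a b e*z3_8 a b e + (3873/2)*z3_5 a b e*z3_5 a b e + (-1375)*z3_5 a b e*z3_6 a b e + (-483)*z3_5 a b e*z3_7 a b e + (-483)*z3_5 a b e*z3_8 a b e + (614)*z3_6 a b e*z3_6 a b e + (570)*z3_6 a b e*z3_7 a b e + (-610)*z3_6 a b e*z3_8 a b e + (555)*z3_7 a b e*z3_7 a b e + (-545)*z3_7 a b e*z3_8 a b e + (555)*z3_8 a b e*z3_8 a b e)"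
  unfolding z0_0_def z0_1_def z0_2_def z0_3_def z0_4_def z0_5_def z0_6_def z0_7_def z0_8_def z0_9_def z0_10_def z0_11_def z0_12_def z0_13_def z1_0_def z1_1_def z1_2_def z1_3_def z1_4_def z1_5_def z1_6_def z1_7_def z1_8_def z2_0_def z2_1_def z2_2_def z2_3_def z2_4_def z2_5_def z2_6_def z2_7_def z2_8_def z3_0_def z3_1_def z3_2_def z3_3_def z3_4_def z3_5_def z3_6_def z3_7_def z3_8_def by algebra

lemma gram0: "(17)*z0_0 a b e*z0_0 a b e + (-195/2)*z0_0 a b e*z0_1 a b e + (77)*z0_0 a b e*z0_2 a b e + (-21/2)*z0_0 a b e*z0_3 a b e + (5/2)*z0_0 a b e*z0_4 a b e + (-161/2)*z0_0 a b e*z0_5 a b e + (157)*z0_0 a b e*z0_6 a b e + (-79)*z0_0 a b e*z0_7 a b e + (17/2)*z0_0 a b e*z0_8 a b e + (85/2)*z0_0 a b e*z0_9 a b e + (-103/2)*z0_0 a b e*z0_10 a b e + (-15/2)*z0_0 a b e*z0_11 a b e + (-3)*z0_0 a b e*z0_12 a b e + (9)*z0_0 a b e*z0_13 a b e + (425)*z0_1 a b e*z0_1 a b e + (-2405/2)*z0_1 a b e*z0_2 a b e + (391)*z0_1 a b e*z0_3 a b e + (-13)*z0_1 a b e*z0_4 a b e + (-11)*z0_1 a b e*z0_5 a b e + (-515)*z0_1 a b e*z0_6 a b e + (1321/2)*z0_1 a b e*z0_7 a b e + (-115)*z0_1 a b e*z0_8 a b e + (317/2)*z0_1 a b e*z0_9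 a b e + (-79)*z0_1 a b e*z0_10 a b e + (33/2)*z0_1 a b e*z0_11 a b e + (-97/2)*z0_1 a b e*z0_12 a b e + (5)*z0_1 a b e*z0_13 a b e + (2529/2)*z0_2 a b e*z0_2 a b e + (-1200)*z0_2 a b e*z0_3 a b e + (153/2)*z0_2 a b e*z0_4 a b e + (207)*z0_2 a b e*z0_5 a b e + (-406)*z0_2 a b e*z0_6 a b e + (-406)*z0_2 a b e*z0_7 a b e + (208)*z0_2 a b e*z0_8 a b e + (-172)*z0_2 a b e*z0_9 a b e + (463)*z0_2 a b e*z0_10 a b e + (-339/2)*z0_2 a b e*z0_11 a b e + (-1)*z0_2 a b e*z0_12 a b e + (-5/2)*z0_2 a b e*z0_13 a b e + (851/2)*z0_3 a b e*z0_3 a b e + (-195/2)*z0_3 a b e*z0_4 a b e + (-116)*z0_3 a b e*z0_5 a b e + (658)*z0_3 a b e*z0_6 a b e + (-514)*z0_3 a b e*z0_7 a b e + (-9)*z0_3 a b e*z0_8 a b e + (18)*z0_3 a b e*z0_9 a b e + (-84)*z0_3 a b e*z0_10 a b e + (155)*z0_3 a b e*z0_11 a b e + (4)*z0_3 a b e*z0_12 a b e + (-48)*z0_3 a b e*z0_13 a b e + (17)*z0_4 a b e*z0_4 a b e + (12)*z0_4 a b e*z0_5 a b e + (-81)*z0_4 a b e*z0_6 a b e + (155)*z0_4 a b e*z0_7 a b e + (-161/2)*z0_4 a b e*z0_8 a b e + (-5)*z0_4 a b e*z0_9 a b e + (-48)*z0_4 a b e*z0_10 a b e + (46)*z0_4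 a b e*z0_11 a b e + (8)*z0_4 a b e*z0_12 a b e + (-11/2)*z0_4 a b e*z0_13 a b e + (599/2)*z0_5 a b e*z0_5 a b e + (-556)*z0_5 a b e*z0_6 a b e + (77)*z0_5 a b e*z0_7 a b e + (-51)*z0_5 a b e*z0_8 a b e + (-1273/2)*z0_5 a b e*z0_9 a b e + (432)*z0_5 a b e*z0_10 a b e + (97)*z0_5 a b e*z0_11 a b e + (132)*z0_5 a b e*z0_12 a b e + (-105)*z0_5 a b e*z0_13 a b e + (2843/2)*z0_6 a b e*z0_6 a b e + (-1736)*z0_6 a b e*z0_7 a b e + (78)*z0_6 a b e*z0_8 a b e + (-118)*z0_6 a b e*z0_9 a b e + (-848)*z0_6 a b e*z0_10 a b e + (315)*z0_6 a b e*z0_11 a b e + (228)*z0_6 a b e*z0_12 a b e + (7)*z0_6 a b e*z0_13 a b e + (2841/2)*z0_7 a b e*z0_7 a b e + (-557)*z0_7 a b e*z0_8 a b e + (316)*z0_7 a b e*z0_9 a b e + (-847)*z0_7 a b e*z0_10 a b e + (-116)*z0_7 a b e*z0_11 a b e + (6)*z0_7 a b e*z0_12 a b e + (227)*z0_7 a b e*z0_13 a b e + (296)*z0_8 a b e*z0_8 a b e + (97)*z0_8 a b e*z0_9 a b e + (432)*z0_8 a b e*z0_10 a b e + (-634)*z0_8 a b e*z0_11 a b e + (-105)*z0_8 a b e*z0_12 a b e + (135)*z0_8 a b e*z0_13 a b e + (542)*z0_9 a b e*z0_9 a b e + (-350)*z0_9 a b e*z0_10 a b e + (-293)*z0_9 a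 b e*z0_11 a b e + (-341)*z0_9 a b e*z0_12 a b e + (193)*z0_9 a b e*z0_13 a b e + (841)*z0_10 a b e*z0_10 a b e + (-350)*z0_10 a b e*z0_11 a b e + (-197)*z0_10 a b e*z0_12 a b e + (-196)*z0_10 a b e*z0_13 a b e + (1083/2)*z0_11 a b e*z0_11 a b e + (193)*z0_11 a b e*z0_12 a b e + (-341)*z0_11 a b e*z0_13 a b e + (195/2)*z0_12 a b e*z0_12 a b e + (-56)*z0_12 a b e*z0_13 a b e + (195/2)*z0_13 a b e*z0_13 a b e = 9450 * ((1/2570400)*(sq0 a b e)^2 + (1/199398780000)*(sq1 a b e)^2 + (1/12103242035850000)*(sq2 a b e)^2 + (1/125654684037219820350000)*(sq3 a b e)^2 + (1/1313476901626906695322198800)*(sq4 a b e)^2 + (1/25546752286129175856696551660400)*(sq5 a b e)^2 + (1/5659049574775675591954624806860418300)*(sq6 a b e)^2 + (1/10238983252604187872072740599431030639774400)*(sq7 a b e)^2 + (1/34309293270007963326390654779909808143730000000)*(sq8 a b e)^2 + (1/532318646405819426881731178176330387649649730000000)*(sq9 a b e)^2 + (1/342787841372245791857521271409102862028296153286546580000)*(sq10 a b e)^2 + (1/10498925577914819695315025616520034647852280297928709708620000)*(sq11 a b e)^2 + (1/214969524086649803313474666534222167979881168070116199033694230000)*(sq12 a b e)^2 + (164526670629664622087969891047739/255383116770375343451873486997788400)*(sq13 a b e)^2)"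
  unfolding sq0_def sq1_def sq2_def sq3_def sq4_def sq5_def sq6_def sq7_def sq8_def sq9_def sq10_def sq11_def sq12_def sq13_def by algebra

lemma gram1: "(272)*z1_0 a b e*z1_0 a b e + (-736)*z1_0 a b e*z1_1 a b e + (96)*z1_0 a b e*z1_2 a b e + (-5)*z1_0 a b e*z1_3 a b e + (-575)*z1_0 a b e*z1_4 a b e + (783)*z1_0 a b e*z1_5 a b e + (-13)*z1_0 a b e*z1_6 a b e + (7)*z1_0 a b e*z1_7 a b e + (-118)*z1_0 a b e*z1_8 a b e + (1134)*z1_1 a b e*z1_1 a b e + (-1077)*z1_1 a b e*z1_2 a b e + (44)*z1_1 a b e*z1_3 a b e + (-214)*z1_1 a b e*z1_4 a b e + (-893)*z1_1 a b e*z1_5 a b e + (300)*z1_1 a b e*z1_6 a b e + (396)*z1_1 a b e*z1_7 a b e + (-47)*z1_1 a b e*z1_8 a b e + (692)*z1_2 a b e*z1_2 a b e + (-235)*z1_2 a b e*z1_3 a b e + (715)*z1_2 a b e*z1_4 a b e + (-1051)*z1_2 a b e*z1_5 a b e + (-22)*z1_2 a b e*z1_6 a b e + (-28)*z1_2 a b e*z1_7 a b e + (273)*z1_2 a b e*z1_8 a b e + (179/2)*z1_3 a b e*z1_3 a b e + (-32)*z1_3 a b e*z1_4 a b e + (392)*z1_3 a b e*z1_5 a b e + (-341)*z1_3 a b e*z1_6 a b e + (-120)*z1_3 a b e*z1_7 a b e + (122)*z1_3 a b e*z1_8 a b e + (1637/2)*z1_4 a b e*z1_4 a b e + (-1345)*z1_4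 a b e*z1_5 a b e + (-192)*z1_4 a b e*z1_6 a b e + (-354)*z1_4 a b e*z1_7 a b e + (387)*z1_4 a b e*z1_8 a b e + (3427/2)*z1_5 a b e*z1_5 a b e + (-639)*z1_5 a b e*z1_6 a b e + (-486)*z1_5 a b e*z1_7 a b e + (-333)*z1_5 a b e*z1_8 a b e + (1071/2)*z1_6 a b e*z1_6 a b e + (392)*z1_6 a b e*z1_7 a b e + (-609)*z1_6 a b e*z1_8 a b e + (207)*z1_7 a b e*z1_7 a b e + (-183)*z1_7 a b e*z1_8 a b e + (305)*z1_8 a b e*z1_8 a b e = 9450 * ((1/10281600)*(sq14 a b e)^2 + (1/6949076400)*(sq15 a b e)^2 + (1/5852433251624400)*(sq16 a b e)^2 + (1/450316347698301174921600)*(sq17 a b e)^2 + (1/12490832140707406635823766400)*(sq18 a b e)^2 + (1/10938529952663337618848822131200)*(sq19 a b e)^2 + (1/1033536380914988306760418870606732800)*(sq20 a b e)^2 + (1/1193950283718292560027257662707065849700)*(sq21 a b e)^2 + (49237503276768813011/31819069263287603852100)*(sq22 a b e)^2)"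
  unfolding sq14_def sq15_def sq16_def sq17_def sq18_def sq19_def sq20_def sq21_def sq22_def by algebra

lemma gram2: "(179/2)*z2_0 a b e*z2_0 a b e + (-235)*z2_0 a b e*z2_1 a b e + (44)*z2_0 a b e*z2_2 a b e + (-5)*z2_0 a b e*z2_3 a b e + (-341)*z2_0 a b e*z2_4 a b e + (392)*z2_0 a b e*z2_5 a b e + (-32)*z2_0 a b e*z2_6 a b e + (122)*z2_0 a b e*z2_7 a b e + (-120)*z2_0 a b e*z2_8 a b e + (692)*z2_1 a b e*z2_1 a b e + (-1078)*z2_1 a b e*z2_2 a b e + (96)*z2_1 a b e*z2_3 a b e + (-23)*z2_1 a b e*z2_4 a b e + (-1051)*z2_1 a b e*z2_5 a b e + (716)*z2_1 a b e*z2_6 a b e + (274)*z2_1 a b e*z2_7 a b e + (-29)*z2_1 a b e*z2_8 a b e + (1134)*z2_2 a b e*z2_2 a b e + (-736)*z2_2 a b e*z2_3 a b e + (300)*z2_2 a b e*z2_4 a b e + (-893)*z2_2 a b e*z2_5 a b e + (-214)*z2_2 a b e*z2_6 a b e + (-47)*z2_2 a b e*z2_7 a b e + (396)*z2_2 a b e*z2_8 a b e + (272)*z2_3 a b e*z2_3 a b e + (-13)*z2_3 a b e*z2_4 a b e + (783)*z2_3 a b e*z2_5 a b e + (-575)*z2_3 a b e*z2_6 a b e + (-118)*z2_3 a b e*z2_7 a b e + (7)*z2_3 a b e*z2_8 a b e + (1071/2)*z2_4 a b e*z2_4 a b e + (-638)*z2_4 a b e*z2_5 a b e + (-193)*z2_4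 a b e*z2_6 a b e + (-609)*z2_4 a b e*z2_7 a b e + (392)*z2_4 a b e*z2_8 a b e + (1713)*z2_5 a b e*z2_5 a b e + (-1345)*z2_5 a b e*z2_6 a b e + (-333)*z2_5 a b e*z2_7 a b e + (-486)*z2_5 a b e*z2_8 a b e + (818)*z2_6 a b e*z2_6 a b e + (387)*z2_6 a b e*z2_7 a b e + (-354)*z2_6 a b e*z2_8 a b e + (305)*z2_7 a b e*z2_7 a b e + (-183)*z2_7 a b e*z2_8 a b e + (413/2)*z2_8 a b e*z2_8 a b e = 9450 * ((1/3383100)*(sq23 a b e)^2 + (1/651283964100)*(sq24 a b e)^2 + (1/7463816105407200)*(sq25 a b e)^2 + (1/60787509191842296679200)*(sq26 a b e)^2 + (1/670422334482982837464231600)*(sq27 a b e)^2 + (1/12393064938720858025473112719600)*(sq28 a b e)^2 + (1/1261852960990688624602673324976117600)*(sq29 a b e)^2 + (1/76462946844552530371166602776208105010400)*(sq30 a b e)^2 + (72152290805180699738/68580072806717109876525)*(sq31 a b e)^2)"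
  unfolding sq23_def sq24_def sq25_def sq26_def sq27_def sq28_def sq29_def sq30_def sq31_def by algebra

lemma gram3: "(213/2)*z3_0 a b e*z3_0 a b e + (-501)*z3_0 a b e*z3_1 a b e + (270)*z3_0 a b e*z3_2 a b e + (-25)*z3_0 a b e*z3_3 a b e + (-215)*z3_0 a b e*z3_4 a b e + (463)*z3_0 a b e*z3_5 a b e + (-165)*z3_0 a b e*z3_6 a b e + (-7)*z3_0 a b e*z3_7 a b e + (-38)*z3_0 a b e*z3_8 a b e + (961)*z3_1 a b e*z3_1 a b e + (-1573)*z3_1 a b e*z3_2 a b e + (270)*z3_1 a b e*z3_3 a b e + (-124)*z3_1 a b e*z3_4 a b e + (-662)*z3_1 a b e*z3_5 a b e + (543)*z3_1 a b e*z3_6 a b e + (365)*z3_1 a b e*z3_7 a b e + (-202)*z3_1 a b e*z3_8 a b e + (961)*z3_2 a b e*z3_2 a b e + (-501)*z3_2 a b e*z3_3 a b e + (544)*z3_2 a b e*z3_4 a b e + (-663)*z3_2 a b e*z3_5 a b e + (-124)*z3_2 a b e*z3_6 a b e + (-202)*z3_2 a b e*z3_7 a b e + (365)*z3_2 a b e*z3_8 a b e + (213/2)*z3_3 a b e*z3_3 a b e + (-166)*z3_3 a b e*z3_4 a b e + (463)*z3_3 a b e*z3_5 a b e + (-215)*z3_3 a b e*z3_6 a b e + (-38)*z3_3 a b e*z3_7 a b e + (-7)*z3_3 a b e*z3_8 a b e + (614)*z3_4 a b e*z3_4 a b e + (-1375)*z3_4 a b e*z3_5 a b e + (133)*z3_4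 a b e*z3_6 a b e + (-610)*z3_4 a b e*z3_7 a b e + (570)*z3_4 a b e*z3_8 a b e + (3873/2)*z3_5 a b e*z3_5 a b e + (-1375)*z3_5 a b e*z3_6 a b e + (-483)*z3_5 a b e*z3_7 a b e + (-483)*z3_5 a b e*z3_8 a b e + (614)*z3_6 a b e*z3_6 a b e + (570)*z3_6 a b e*z3_7 a b e + (-610)*z3_6 a b e*z3_8 a b e + (555)*z3_7 a b e*z3_7 a b e + (-545)*z3_7 a b e*z3_8 a b e + (555)*z3_8 a b e*z3_8 a b e = 9450 * ((1/4025700)*(sq32 a b e)^2 + (1/70845610500)*(sq33 a b e)^2 + (1/20897630074660500)*(sq34 a b e)^2 + (1/383688275254325048700)*(sq35 a b e)^2 + (1/76150234361378504743208100)*(sq36 a b e)^2 + (1/28569348888948757655290902995100)*(sq37 a b e)^2 + (1/5275859045504848981939602965465750700)*(sq38 a b e)^2 + (1/17988125165701145859088384932061914550200)*(sq39 a b e)^2 + (1211996275190177897153/632734724012447172551400)*(sq40 a b e)^2)"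
  unfolding sq32_def sq33_def sq34_def sq35_def sq36_def sq37_def sq38_def sq39_def sq40_def by algebra



lemma sum_if_le: "(N::nat) \<le> M \<Longrightarrow> (\<Sum>k\<le>M. if k \<le> N then g k else 0) = (\<Sum>k\<le>N. (g k :: real))"
proof -
  assume "N \<le> M"
  then have "{k\<in>{..M}. k \<le> N} = {..N}" by auto
  then show ?thesis by (simp add: sum.inter_filter[symmetric])
qed

lemma sum_if_const: "(\<Sum>k\<in>A. if P then g k else 0) = (if P then (\<Sum>k\<in>A. g k) else (0::real))"
  by (cases P) auto

lemma rp_ext:
  fixes f :: "real \<Rightarrow> real \<Rightarrow> real \<Rightarrow> real"
  assumes "\<forall>a b e. f a b e = (\<Sum>i\<le>N. \<Sum>j\<le>N. \<Sum>k\<le>N. of_rat (c i j k) * a^i*b^j*e^k)" "N \<le> M"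
  shows "\<forall>a b e. f a b e = (\<Sum>i\<le>M. \<Sum>j\<le>M. \<Sum>k\<le>M. of_rat (if i\<le>N \<and> j\<le>N \<and> k\<le>N then c i j k else 0) * a^i*b^j*e^k)"
proof (intro allI)
  fix a b e :: real
  have eq1: "\<And>i j k. of_rat (if i\<le>N \<and> j\<le>N \<and> k\<le>N then c i j k else 0) * a^i*b^j*e^k = (if i \<le> N then (if j \<le> N then (if k \<le> N then of_rat (c i j k) * a^i*b^j*e^k else 0) else 0) else 0)"
    by simp
  have "(\<Sum>i\<le>M. \<Sum>j\<le>M. \<Sum>k\<le>M. of_rat (if i\<le>N \<and> j\<le>N \<and> k\<le>N then c i j k else 0) * a^i*b^j*e^k)
      = (\<Sum>i\<le>N. \<Sum>j\<le>N. \<Sum>k\<le>N. of_rat (c i j k) * a^i*b^j*e^k)"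
    using assms(2) by (simp only: eq1 sum_if_const sum_if_le)
  then show "f a b e = (\<Sum>i\<le>M. \<Sum>j\<le>M. \<Sum>k\<le>M. of_rat (if i\<le>N \<and> j\<le>N \<and> k\<le>N then c i j k else 0) * a^i*b^j*e^k)"
    using assms(1) by simp
qed

lemma rp_add:
  assumes "ratpoly3 f" "ratpoly3 g"
  shows "ratpoly3 (\<lambda>a b e. f a b e + g a b e)"
proof -
  obtain N1 c1 where 1: "\<forall>a b e. f a b e = (\<Sum>i\<le>N1. \<Sum>j\<le>N1. \<Sum>k\<le>N1. of_rat (c1 i j k) * a^i*b^j*e^k)"
    using assms(1) unfolding ratpoly3_def by blast
  obtain N2 c2 where 2: "\<forall>a b e. g a b e = (\<Sum>i\<le>N2. \<Sum>j\<le>N2. \<Sum>k\<le>N2. of_rat (c2 i j k) * a^i*b^j*e^k)"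
    using assms(2) unfolding ratpoly3_def by blast
  define M where "M = max N1 N2"
  note e1 = rp_ext[OF 1, of M] and e2 = rp_ext[OF 2, of M]
  show ?thesis unfolding ratpoly3_def
    apply (rule exI[of _ M])
    apply (rule exI[of _ "\<lambda>i j k. (if i\<le>N1 \<and> j\<le>N1 \<and> k\<le>N1 then c1 i j k else 0) + (if i\<le>N2 \<and> j\<le>N2 \<and> k\<le>N2 then c2 i j k else 0)"])
    using e1 e2 by (simp add: M_def of_rat_add distrib_right sum.distrib del: of_rat_eq_0_iff)
qed

lemma rp_cmul:
  assumes "r \<in> \<rat>" "ratpoly3 f"
  shows "ratpoly3 (\<lambda>a b e. r * f a b e)"
proof -
  obtain q where q: "r = of_rat q" using assms(1) Rats_cases by blast
  obtain N c where 1: "\<forall>a b e. f a b e = (\<Sum>i\<le>N. \<Sum>j\<le>N. \<Sum>k\<le>N. of_rat (c i j k) * a^i*b^j*e^k)"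
    using assms(2) unfolding ratpoly3_def by blast
  show ?thesis unfolding ratpoly3_def
    apply (rule exI[of _ N])
    apply (rule exI[of _ "\<lambda>i j k. q * c i j k"])
    using 1 by (simp add: q of_rat_mult sum_distrib_left mult.assoc)
qed

lemma rp_diff:
  assumes "ratpoly3 f" "ratpoly3 g"
  shows "ratpoly3 (\<lambda>a b e. f a b e - g a b e)"
proof -
  have "ratpoly3 (\<lambda>a b e. f a b e + (-1) * g a b e)"
    by (intro rp_add rp_cmul assms) simp
  then show ?thesis by simp
qed

lemma rp_mono: "ratpoly3 (\<lambda>a b e. a^i*b^j*e^k)"
proof -
  define N where "N = i + j + k"
  have eq: "\<And>i' j' k'. of_rat (if i' = i \<and> j' = j \<and> k' = k then 1 else 0) * a^i'*b^j'*e^k' = (if i' = i then (if j' = j then (if k' = k then a^i'*b^j'*e^k' else 0) else 0) else (0::real))" for a b e :: real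
    by simp
  have "(\<Sum>i'\<le>N. \<Sum>j'\<le>N. \<Sum>k'\<le>N. of_rat (if i' = i \<and> j' = j \<and> k' = k then 1 else 0) * a^i'*b^j'*e^k')
     = a^i*b^j*e^k" for a b e :: real
    by (simp only: eq sum_if_const) (simp add: N_def)
  then show ?thesis unfolding ratpoly3_def by (intro exI[of _ N] exI allI) (rule sym)
qed

lemma rp_neg: "ratpoly3 f \<Longrightarrow> ratpoly3 (\<lambda>a b e. - f a b e)"
  using rp_cmul[of "-1" f] by simp


lemma rp_z0_0: "ratpoly3 z0_0"
  unfolding z0_0_def[abs_def] by (intro rp_diff rp_mono)

lemma rp_z0_1: "ratpoly3 z0_1"
  unfolding z0_1_def[abs_def] by (intro rp_diff rp_mono)

lemma rp_z0_2: "ratpoly3 z0_2"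
  unfolding z0_2_def[abs_def] by (intro rp_diff rp_mono)

lemma rp_z0_3: "ratpoly3 z0_3"
  unfolding z0_3_def[abs_def] by (intro rp_diff rp_mono)

lemma rp_z0_4: "ratpoly3 z0_4"
  unfolding z0_4_def[abs_def] by (intro rp_diff rp_mono)

lemma rp_z0_5: "ratpoly3 z0_5"
  unfolding z0_5_def[abs_def] by (intro rp_diff rp_mono)

lemma rp_z0_6: "ratpoly3 z0_6"
  unfolding z0_6_def[abs_def] by (intro rp_diff rp_mono)

lemma rp_z0_7: "ratpoly3 z0_7"
  unfolding z0_7_def[abs_def] by (intro rp_diff rp_mono)

lemma rp_z0_8: "ratpoly3 z0_8"
  unfolding z0_8_def[abs_def] by (intro rp_diff rp_mono)

lemma rp_z0_9: "ratpoly3 z0_9"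
  unfolding z0_9_def[abs_def] by (intro rp_diff rp_mono)

lemma rp_z0_10: "ratpoly3 z0_10"
  unfolding z0_10_def[abs_def] by (intro rp_diff rp_mono)

lemma rp_z0_11: "ratpoly3 z0_11"
  unfolding z0_11_def[abs_def] by (intro rp_diff rp_mono)

lemma rp_z0_12: "ratpoly3 z0_12"
  unfolding z0_12_def[abs_def] by (intro rp_diff rp_mono)

lemma rp_z0_13: "ratpoly3 z0_13"
  unfolding z0_13_def[abs_def] by (intro rp_diff rp_mono)

lemma rp_z1_0: "ratpoly3 z1_0"
  unfolding z1_0_def[abs_def] by (intro rp_diff rp_mono)

lemma rp_z1_1: "ratpoly3 z1_1"
  unfolding z1_1_def[abs_def] by (intro rp_diff rp_mono)

lemma rp_z1_2: "ratpoly3 z1_2"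
  unfolding z1_2_def[abs_def] by (intro rp_diff rp_mono)

lemma rp_z1_3: "ratpoly3 z1_3"
  unfolding z1_3_def[abs_def] by (intro rp_diff rp_mono)

lemma rp_z1_4: "ratpoly3 z1_4"
  unfolding z1_4_def[abs_def] by (intro rp_diff rp_mono)

lemma rp_z1_5: "ratpoly3 z1_5"
  unfolding z1_5_def[abs_def] by (intro rp_diff rp_mono)

lemma rp_z1_6: "ratpoly3 z1_6"
  unfolding z1_6_def[abs_def] by (intro rp_diff rp_mono)

lemma rp_z1_7: "ratpoly3 z1_7"
  unfolding z1_7_def[abs_def] by (intro rp_diff rp_mono)

lemma rp_z1_8: "ratpoly3 z1_8"
  unfolding z1_8_def[abs_def] by (intro rp_diff rp_mono)

lemma rp_z2_0: "ratpoly3 z2_0"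
  unfolding z2_0_def[abs_def] by (intro rp_diff rp_mono)

lemma rp_z2_1: "ratpoly3 z2_1"
  unfolding z2_1_def[abs_def] by (intro rp_diff rp_mono)

lemma rp_z2_2: "ratpoly3 z2_2"
  unfolding z2_2_def[abs_def] by (intro rp_diff rp_mono)

lemma rp_z2_3: "ratpoly3 z2_3"
  unfolding z2_3_def[abs_def] by (intro rp_diff rp_mono)

lemma rp_z2_4: "ratpoly3 z2_4"
  unfolding z2_4_def[abs_def] by (intro rp_diff rp_mono)

lemma rp_z2_5: "ratpoly3 z2_5"
  unfolding z2_5_def[abs_def] by (intro rp_diff rp_mono)

lemma rp_z2_6: "ratpoly3 z2_6"
  unfolding z2_6_def[abs_def] by (intro rp_diff rp_mono)

lemma rp_z2_7: "ratpoly3 z2_7"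
  unfolding z2_7_def[abs_def] by (intro rp_diff rp_mono)

lemma rp_z2_8: "ratpoly3 z2_8"
  unfolding z2_8_def[abs_def] by (intro rp_diff rp_mono)

lemma rp_z3_0: "ratpoly3 z3_0"
  unfolding z3_0_def[abs_def] by (intro rp_diff rp_mono)

lemma rp_z3_1: "ratpoly3 z3_1"
  unfolding z3_1_def[abs_def] by (intro rp_diff rp_mono)

lemma rp_z3_2: "ratpoly3 z3_2"
  unfolding z3_2_def[abs_def] by (intro rp_diff rp_mono)

lemma rp_z3_3: "ratpoly3 z3_3"
  unfolding z3_3_def[abs_def] by (intro rp_diff rp_mono)

lemma rp_z3_4: "ratpoly3 z3_4"
  unfolding z3_4_def[abs_def] by (intro rp_diff rp_mono)

lemma rp_z3_5: "ratpoly3 z3_5"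
  unfolding z3_5_def[abs_def] by (intro rp_diff rp_mono)

lemma rp_z3_6: "ratpoly3 z3_6"
  unfolding z3_6_def[abs_def] by (intro rp_diff rp_mono)

lemma rp_z3_7: "ratpoly3 z3_7"
  unfolding z3_7_def[abs_def] by (intro rp_diff rp_mono)

lemma rp_z3_8: "ratpoly3 z3_8"
  unfolding z3_8_def[abs_def] by (intro rp_diff rp_mono)

lemma rp_sq0: "ratpoly3 sq0"
  unfolding sq0_def[abs_def] by (intro rp_add rp_cmul rp_z0_0 rp_z0_1 rp_z0_2 rp_z0_3 rp_z0_4 rp_z0_5 rp_z0_6 rp_z0_7 rp_z0_8 rp_z0_9 rp_z0_10 rp_z0_11 rp_z0_12 rp_z0_13 rp_z1_0 rp_z1_1 rp_z1_2 rp_z1_3 rp_z1_4 rp_z1_5 rp_z1_6 rp_z1_7 rp_z1_8 rp_z2_0 rp_z2_1 rp_z2_2 rp_z2_3 rp_z2_4 rp_z2_5 rp_z2_6 rp_z2_7 rp_z2_8 rp_z3_0 rp_z3_1 rp_z3_2 rp_z3_3 rp_z3_4 rp_z3_5 rp_z3_6 rp_z3_7 rp_z3_8) simp_all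

lemma rp_sq1: "ratpoly3 sq1"
  unfolding sq1_def[abs_def] by (intro rp_add rp_cmul rp_z0_0 rp_z0_1 rp_z0_2 rp_z0_3 rp_z0_4 rp_z0_5 rp_z0_6 rp_z0_7 rp_z0_8 rp_z0_9 rp_z0_10 rp_z0_11 rp_z0_12 rp_z0_13 rp_z1_0 rp_z1_1 rp_z1_2 rp_z1_3 rp_z1_4 rp_z1_5 rp_z1_6 rp_z1_7 rp_z1_8 rp_z2_0 rp_z2_1 rp_z2_2 rp_z2_3 rp_z2_4 rp_z2_5 rp_z2_6 rp_z2_7 rp_z2_8 rp_z3_0 rp_z3_1 rp_z3_2 rp_z3_3 rp_z3_4 rp_z3_5 rp_z3_6 rp_z3_7 rp_z3_8) simp_all

lemma rp_sq2: "ratpoly3 sq2"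
  unfolding sq2_def[abs_def] by (intro rp_add rp_cmul rp_z0_0 rp_z0_1 rp_z0_2 rp_z0_3 rp_z0_4 rp_z0_5 rp_z0_6 rp_z0_7 rp_z0_8 rp_z0_9 rp_z0_10 rp_z0_11 rp_z0_12 rp_z0_13 rp_z1_0 rp_z1_1 rp_z1_2 rp_z1_3 rp_z1_4 rp_z1_5 rp_z1_6 rp_z1_7 rp_z1_8 rp_z2_0 rp_z2_1 rp_z2_2 rp_z2_3 rp_z2_4 rp_z2_5 rp_z2_6 rp_z2_7 rp_z2_8 rp_z3_0 rp_z3_1 rp_z3_2 rp_z3_3 rp_z3_4 rp_z3_5 rp_z3_6 rp_z3_7 rp_z3_8) simp_all

lemma rp_sq3: "ratpoly3 sq3"
  unfolding sq3_def[abs_def] by (intro rp_add rp_cmul rp_z0_0 rp_z0_1 rp_z0_2 rp_z0_3 rp_z0_4 rp_z0_5 rp_z0_6 rp_z0_7 rp_z0_8 rp_z0_9 rp_z0_10 rp_z0_11 rp_z0_12 rp_z0_13 rp_z1_0 rp_z1_1 rp_z1_2 rp_z1_3 rp_z1_4 rp_z1_5 rp_z1_6 rp_z1_7 rp_z1_8 rp_z2_0 rp_z2_1 rp_z2_2 rp_z2_3 rp_z2_4 rp_z2_5 rp_z2_6 rp_z2_7 rp_z2_8 rp_z3_0 rp_z3_1 rp_z3_2 rp_z3_3 rp_z3_4 rp_z3_5 rp_z3_6 rp_z3_7 rp_z3_8) simp_all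

lemma rp_sq4: "ratpoly3 sq4"
  unfolding sq4_def[abs_def] by (intro rp_add rp_cmul rp_z0_0 rp_z0_1 rp_z0_2 rp_z0_3 rp_z0_4 rp_z0_5 rp_z0_6 rp_z0_7 rp_z0_8 rp_z0_9 rp_z0_10 rp_z0_11 rp_z0_12 rp_z0_13 rp_z1_0 rp_z1_1 rp_z1_2 rp_z1_3 rp_z1_4 rp_z1_5 rp_z1_6 rp_z1_7 rp_z1_8 rp_z2_0 rp_z2_1 rp_z2_2 rp_z2_3 rp_z2_4 rp_z2_5 rp_z2_6 rp_z2_7 rp_z2_8 rp_z3_0 rp_z3_1 rp_z3_2 rp_z3_3 rp_z3_4 rp_z3_5 rp_z3_6 rp_z3_7 rp_z3_8) simp_all

lemma rp_sq5: "ratpoly3 sq5"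
  unfolding sq5_def[abs_def] by (intro rp_add rp_cmul rp_z0_0 rp_z0_1 rp_z0_2 rp_z0_3 rp_z0_4 rp_z0_5 rp_z0_6 rp_z0_7 rp_z0_8 rp_z0_9 rp_z0_10 rp_z0_11 rp_z0_12 rp_z0_13 rp_z1_0 rp_z1_1 rp_z1_2 rp_z1_3 rp_z1_4 rp_z1_5 rp_z1_6 rp_z1_7 rp_z1_8 rp_z2_0 rp_z2_1 rp_z2_2 rp_z2_3 rp_z2_4 rp_z2_5 rp_z2_6 rp_z2_7 rp_z2_8 rp_z3_0 rp_z3_1 rp_z3_2 rp_z3_3 rp_z3_4 rp_z3_5 rp_z3_6 rp_z3_7 rp_z3_8) simp_all

lemma rp_sq6: "ratpoly3 sq6"
  unfolding sq6_def[abs_def] by (intro rp_add rp_cmul rp_z0_0 rp_z0_1 rp_z0_2 rp_z0_3 rp_z0_4 rp_z0_5 rp_z0_6 rp_z0_7 rp_z0_8 rp_z0_9 rp_z0_10 rp_z0_11 rp_z0_12 rp_z0_13 rp_z1_0 rp_z1_1 rp_z1_2 rp_z1_3 rp_z1_4 rp_z1_5 rp_z1_6 rp_z1_7 rp_z1_8 rp_z2_0 rp_z2_1 rp_z2_2 rp_z2_3 rp_z2_4 rp_z2_5 rp_z2_6 rp_z2_7 rp_z2_8 rp_z3_0 rp_z3_1 rp_z3_2 rp_z3_3 rp_z3_4 rp_z3_5 rp_z3_6 rp_z3_7 rp_z3_8) simp_all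

lemma rp_sq7: "ratpoly3 sq7"
  unfolding sq7_def[abs_def] by (intro rp_add rp_cmul rp_z0_0 rp_z0_1 rp_z0_2 rp_z0_3 rp_z0_4 rp_z0_5 rp_z0_6 rp_z0_7 rp_z0_8 rp_z0_9 rp_z0_10 rp_z0_11 rp_z0_12 rp_z0_13 rp_z1_0 rp_z1_1 rp_z1_2 rp_z1_3 rp_z1_4 rp_z1_5 rp_z1_6 rp_z1_7 rp_z1_8 rp_z2_0 rp_z2_1 rp_z2_2 rp_z2_3 rp_z2_4 rp_z2_5 rp_z2_6 rp_z2_7 rp_z2_8 rp_z3_0 rp_z3_1 rp_z3_2 rp_z3_3 rp_z3_4 rp_z3_5 rp_z3_6 rp_z3_7 rp_z3_8) simp_all

lemma rp_sq8: "ratpoly3 sq8"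
  unfolding sq8_def[abs_def] by (intro rp_add rp_cmul rp_z0_0 rp_z0_1 rp_z0_2 rp_z0_3 rp_z0_4 rp_z0_5 rp_z0_6 rp_z0_7 rp_z0_8 rp_z0_9 rp_z0_10 rp_z0_11 rp_z0_12 rp_z0_13 rp_z1_0 rp_z1_1 rp_z1_2 rp_z1_3 rp_z1_4 rp_z1_5 rp_z1_6 rp_z1_7 rp_z1_8 rp_z2_0 rp_z2_1 rp_z2_2 rp_z2_3 rp_z2_4 rp_z2_5 rp_z2_6 rp_z2_7 rp_z2_8 rp_z3_0 rp_z3_1 rp_z3_2 rp_z3_3 rp_z3_4 rp_z3_5 rp_z3_6 rp_z3_7 rp_z3_8) simp_all

lemma rp_sq9: "ratpoly3 sq9"
  unfolding sq9_def[abs_def] by (intro rp_add rp_cmul rp_z0_0 rp_z0_1 rp_z0_2 rp_z0_3 rp_z0_4 rp_z0_5 rp_z0_6 rp_z0_7 rp_z0_8 rp_z0_9 rp_z0_10 rp_z0_11 rp_z0_12 rp_z0_13 rp_z1_0 rp_z1_1 rp_z1_2 rp_z1_3 rp_z1_4 rp_z1_5 rp_z1_6 rp_z1_7 rp_z1_8 rp_z2_0 rp_z2_1 rp_z2_2 rp_z2_3 rp_z2_4 rp_z2_5 rp_z2_6 rp_z2_7 rp_z2_8 rp_z3_0 rp_z3_1 rp_z3_2 rp_z3_3 rp_z3_4 rp_z3_5 rp_z3_6 rp_z3_7 rp_z3_8) simp_all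

lemma rp_sq10: "ratpoly3 sq10"
  unfolding sq10_def[abs_def] by (intro rp_add rp_cmul rp_z0_0 rp_z0_1 rp_z0_2 rp_z0_3 rp_z0_4 rp_z0_5 rp_z0_6 rp_z0_7 rp_z0_8 rp_z0_9 rp_z0_10 rp_z0_11 rp_z0_12 rp_z0_13 rp_z1_0 rp_z1_1 rp_z1_2 rp_z1_3 rp_z1_4 rp_z1_5 rp_z1_6 rp_z1_7 rp_z1_8 rp_z2_0 rp_z2_1 rp_z2_2 rp_z2_3 rp_z2_4 rp_z2_5 rp_z2_6 rp_z2_7 rp_z2_8 rp_z3_0 rp_z3_1 rp_z3_2 rp_z3_3 rp_z3_4 rp_z3_5 rp_z3_6 rp_z3_7 rp_z3_8) simp_all

lemma rp_sq11: "ratpoly3 sq11"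
  unfolding sq11_def[abs_def] by (intro rp_add rp_cmul rp_z0_0 rp_z0_1 rp_z0_2 rp_z0_3 rp_z0_4 rp_z0_5 rp_z0_6 rp_z0_7 rp_z0_8 rp_z0_9 rp_z0_10 rp_z0_11 rp_z0_12 rp_z0_13 rp_z1_0 rp_z1_1 rp_z1_2 rp_z1_3 rp_z1_4 rp_z1_5 rp_z1_6 rp_z1_7 rp_z1_8 rp_z2_0 rp_z2_1 rp_z2_2 rp_z2_3 rp_z2_4 rp_z2_5 rp_z2_6 rp_z2_7 rp_z2_8 rp_z3_0 rp_z3_1 rp_z3_2 rp_z3_3 rp_z3_4 rp_z3_5 rp_z3_6 rp_z3_7 rp_z3_8) simp_all

lemma rp_sq12: "ratpoly3 sq12"
  unfolding sq12_def[abs_def] by (intro rp_add rp_cmul rp_z0_0 rp_z0_1 rp_z0_2 rp_z0_3 rp_z0_4 rp_z0_5 rp_z0_6 rp_z0_7 rp_z0_8 rp_z0_9 rp_z0_10 rp_z0_11 rp_z0_12 rp_z0_13 rp_z1_0 rp_z1_1 rp_z1_2 rp_z1_3 rp_z1_4 rp_z1_5 rp_z1_6 rp_z1_7 rp_z1_8 rp_z2_0 rp_z2_1 rp_z2_2 rp_z2_3 rp_z2_4 rp_z2_5 rp_z2_6 rp_z2_7 rp_z2_8 rp_z3_0 rp_z3_1 rp_z3_2 rp_z3_3 rp_z3_4 rp_z3_5 rp_z3_6 rp_z3_7 rp_z3_8) simp_all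

lemma rp_sq13: "ratpoly3 sq13"
  unfolding sq13_def[abs_def] by (intro rp_add rp_cmul rp_z0_0 rp_z0_1 rp_z0_2 rp_z0_3 rp_z0_4 rp_z0_5 rp_z0_6 rp_z0_7 rp_z0_8 rp_z0_9 rp_z0_10 rp_z0_11 rp_z0_12 rp_z0_13 rp_z1_0 rp_z1_1 rp_z1_2 rp_z1_3 rp_z1_4 rp_z1_5 rp_z1_6 rp_z1_7 rp_z1_8 rp_z2_0 rp_z2_1 rp_z2_2 rp_z2_3 rp_z2_4 rp_z2_5 rp_z2_6 rp_z2_7 rp_z2_8 rp_z3_0 rp_z3_1 rp_z3_2 rp_z3_3 rp_z3_4 rp_z3_5 rp_z3_6 rp_z3_7 rp_z3_8) simp_all

lemma rp_sq14: "ratpoly3 sq14"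
  unfolding sq14_def[abs_def] by (intro rp_add rp_cmul rp_z0_0 rp_z0_1 rp_z0_2 rp_z0_3 rp_z0_4 rp_z0_5 rp_z0_6 rp_z0_7 rp_z0_8 rp_z0_9 rp_z0_10 rp_z0_11 rp_z0_12 rp_z0_13 rp_z1_0 rp_z1_1 rp_z1_2 rp_z1_3 rp_z1_4 rp_z1_5 rp_z1_6 rp_z1_7 rp_z1_8 rp_z2_0 rp_z2_1 rp_z2_2 rp_z2_3 rp_z2_4 rp_z2_5 rp_z2_6 rp_z2_7 rp_z2_8 rp_z3_0 rp_z3_1 rp_z3_2 rp_z3_3 rp_z3_4 rp_z3_5 rp_z3_6 rp_z3_7 rp_z3_8) simp_all

lemma rp_sq15: "ratpoly3 sq15"
  unfolding sq15_def[abs_def] by (intro rp_add rp_cmul rp_z0_0 rp_z0_1 rp_z0_2 rp_z0_3 rp_z0_4 rp_z0_5 rp_z0_6 rp_z0_7 rp_z0_8 rp_z0_9 rp_z0_10 rp_z0_11 rp_z0_12 rp_z0_13 rp_z1_0 rp_z1_1 rp_z1_2 rp_z1_3 rp_z1_4 rp_z1_5 rp_z1_6 rp_z1_7 rp_z1_8 rp_z2_0 rp_z2_1 rp_z2_2 rp_z2_3 rp_z2_4 rp_z2_5 rp_z2_6 rp_z2_7 rp_z2_8 rp_z3_0 rp_z3_1 rp_z3_2 rp_z3_3 rp_z3_4 rp_z3_5 rp_z3_6 rp_z3_7 rp_z3_8) simp_all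

lemma rp_sq16: "ratpoly3 sq16"
  unfolding sq16_def[abs_def] by (intro rp_add rp_cmul rp_z0_0 rp_z0_1 rp_z0_2 rp_z0_3 rp_z0_4 rp_z0_5 rp_z0_6 rp_z0_7 rp_z0_8 rp_z0_9 rp_z0_10 rp_z0_11 rp_z0_12 rp_z0_13 rp_z1_0 rp_z1_1 rp_z1_2 rp_z1_3 rp_z1_4 rp_z1_5 rp_z1_6 rp_z1_7 rp_z1_8 rp_z2_0 rp_z2_1 rp_z2_2 rp_z2_3 rp_z2_4 rp_z2_5 rp_z2_6 rp_z2_7 rp_z2_8 rp_z3_0 rp_z3_1 rp_z3_2 rp_z3_3 rp_z3_4 rp_z3_5 rp_z3_6 rp_z3_7 rp_z3_8) simp_all

lemma rp_sq17: "ratpoly3 sq17"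
  unfolding sq17_def[abs_def] by (intro rp_add rp_cmul rp_z0_0 rp_z0_1 rp_z0_2 rp_z0_3 rp_z0_4 rp_z0_5 rp_z0_6 rp_z0_7 rp_z0_8 rp_z0_9 rp_z0_10 rp_z0_11 rp_z0_12 rp_z0_13 rp_z1_0 rp_z1_1 rp_z1_2 rp_z1_3 rp_z1_4 rp_z1_5 rp_z1_6 rp_z1_7 rp_z1_8 rp_z2_0 rp_z2_1 rp_z2_2 rp_z2_3 rp_z2_4 rp_z2_5 rp_z2_6 rp_z2_7 rp_z2_8 rp_z3_0 rp_z3_1 rp_z3_2 rp_z3_3 rp_z3_4 rp_z3_5 rp_z3_6 rp_z3_7 rp_z3_8) simp_all

lemma rp_sq18: "ratpoly3 sq18"
  unfolding sq18_def[abs_def] by (intro rp_add rp_cmul rp_z0_0 rp_z0_1 rp_z0_2 rp_z0_3 rp_z0_4 rp_z0_5 rp_z0_6 rp_z0_7 rp_z0_8 rp_z0_9 rp_z0_10 rp_z0_11 rp_z0_12 rp_z0_13 rp_z1_0 rp_z1_1 rp_z1_2 rp_z1_3 rp_z1_4 rp_z1_5 rp_z1_6 rp_z1_7 rp_z1_8 rp_z2_0 rp_z2_1 rp_z2_2 rp_z2_3 rp_z2_4 rp_z2_5 rp_z2_6 rp_z2_7 rp_z2_8 rp_z3_0 rp_z3_1 rp_z3_2 rp_z3_3 rp_z3_4 rp_z3_5 rp_z3_6 rp_z3_7 rp_z3_8) simp_all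

lemma rp_sq19: "ratpoly3 sq19"
  unfolding sq19_def[abs_def] by (intro rp_add rp_cmul rp_z0_0 rp_z0_1 rp_z0_2 rp_z0_3 rp_z0_4 rp_z0_5 rp_z0_6 rp_z0_7 rp_z0_8 rp_z0_9 rp_z0_10 rp_z0_11 rp_z0_12 rp_z0_13 rp_z1_0 rp_z1_1 rp_z1_2 rp_z1_3 rp_z1_4 rp_z1_5 rp_z1_6 rp_z1_7 rp_z1_8 rp_z2_0 rp_z2_1 rp_z2_2 rp_z2_3 rp_z2_4 rp_z2_5 rp_z2_6 rp_z2_7 rp_z2_8 rp_z3_0 rp_z3_1 rp_z3_2 rp_z3_3 rp_z3_4 rp_z3_5 rp_z3_6 rp_z3_7 rp_z3_8) simp_all

lemma rp_sq20: "ratpoly3 sq20"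
  unfolding sq20_def[abs_def] by (intro rp_add rp_cmul rp_z0_0 rp_z0_1 rp_z0_2 rp_z0_3 rp_z0_4 rp_z0_5 rp_z0_6 rp_z0_7 rp_z0_8 rp_z0_9 rp_z0_10 rp_z0_11 rp_z0_12 rp_z0_13 rp_z1_0 rp_z1_1 rp_z1_2 rp_z1_3 rp_z1_4 rp_z1_5 rp_z1_6 rp_z1_7 rp_z1_8 rp_z2_0 rp_z2_1 rp_z2_2 rp_z2_3 rp_z2_4 rp_z2_5 rp_z2_6 rp_z2_7 rp_z2_8 rp_z3_0 rp_z3_1 rp_z3_2 rp_z3_3 rp_z3_4 rp_z3_5 rp_z3_6 rp_z3_7 rp_z3_8) simp_all

lemma rp_sq21: "ratpoly3 sq21"
  unfolding sq21_def[abs_def] by (intro rp_add rp_cmul rp_z0_0 rp_z0_1 rp_z0_2 rp_z0_3 rp_z0_4 rp_z0_5 rp_z0_6 rp_z0_7 rp_z0_8 rp_z0_9 rp_z0_10 rp_z0_11 rp_z0_12 rp_z0_13 rp_z1_0 rp_z1_1 rp_z1_2 rp_z1_3 rp_z1_4 rp_z1_5 rp_z1_6 rp_z1_7 rp_z1_8 rp_z2_0 rp_z2_1 rp_z2_2 rp_z2_3 rp_z2_4 rp_z2_5 rp_z2_6 rp_z2_7 rp_z2_8 rp_z3_0 rp_z3_1 rp_z3_2 rp_z3_3 rp_z3_4 rp_z3_5 rp_z3_6 rp_z3_7 rp_z3_8) simp_all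

lemma rp_sq22: "ratpoly3 sq22"
  unfolding sq22_def[abs_def] by (intro rp_add rp_cmul rp_z0_0 rp_z0_1 rp_z0_2 rp_z0_3 rp_z0_4 rp_z0_5 rp_z0_6 rp_z0_7 rp_z0_8 rp_z0_9 rp_z0_10 rp_z0_11 rp_z0_12 rp_z0_13 rp_z1_0 rp_z1_1 rp_z1_2 rp_z1_3 rp_z1_4 rp_z1_5 rp_z1_6 rp_z1_7 rp_z1_8 rp_z2_0 rp_z2_1 rp_z2_2 rp_z2_3 rp_z2_4 rp_z2_5 rp_z2_6 rp_z2_7 rp_z2_8 rp_z3_0 rp_z3_1 rp_z3_2 rp_z3_3 rp_z3_4 rp_z3_5 rp_z3_6 rp_z3_7 rp_z3_8) simp_all

lemma rp_sq23: "ratpoly3 sq23"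
  unfolding sq23_def[abs_def] by (intro rp_add rp_cmul rp_z0_0 rp_z0_1 rp_z0_2 rp_z0_3 rp_z0_4 rp_z0_5 rp_z0_6 rp_z0_7 rp_z0_8 rp_z0_9 rp_z0_10 rp_z0_11 rp_z0_12 rp_z0_13 rp_z1_0 rp_z1_1 rp_z1_2 rp_z1_3 rp_z1_4 rp_z1_5 rp_z1_6 rp_z1_7 rp_z1_8 rp_z2_0 rp_z2_1 rp_z2_2 rp_z2_3 rp_z2_4 rp_z2_5 rp_z2_6 rp_z2_7 rp_z2_8 rp_z3_0 rp_z3_1 rp_z3_2 rp_z3_3 rp_z3_4 rp_z3_5 rp_z3_6 rp_z3_7 rp_z3_8) simp_all

lemma rp_sq24: "ratpoly3 sq24"
  unfolding sq24_def[abs_def] by (intro rp_add rp_cmul rp_z0_0 rp_z0_1 rp_z0_2 rp_z0_3 rp_z0_4 rp_z0_5 rp_z0_6 rp_z0_7 rp_z0_8 rp_z0_9 rp_z0_10 rp_z0_11 rp_z0_12 rp_z0_13 rp_z1_0 rp_z1_1 rp_z1_2 rp_z1_3 rp_z1_4 rp_z1_5 rp_z1_6 rp_z1_7 rp_z1_8 rp_z2_0 rp_z2_1 rp_z2_2 rp_z2_3 rp_z2_4 rp_z2_5 rp_z2_6 rp_z2_7 rp_z2_8 rp_z3_0 rp_z3_1 rp_z3_2 rp_z3_3 rp_z3_4 rp_z3_5 rp_z3_6 rp_z3_7 rp_z3_8) simp_all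

lemma rp_sq25: "ratpoly3 sq25"
  unfolding sq25_def[abs_def] by (intro rp_add rp_cmul rp_z0_0 rp_z0_1 rp_z0_2 rp_z0_3 rp_z0_4 rp_z0_5 rp_z0_6 rp_z0_7 rp_z0_8 rp_z0_9 rp_z0_10 rp_z0_11 rp_z0_12 rp_z0_13 rp_z1_0 rp_z1_1 rp_z1_2 rp_z1_3 rp_z1_4 rp_z1_5 rp_z1_6 rp_z1_7 rp_z1_8 rp_z2_0 rp_z2_1 rp_z2_2 rp_z2_3 rp_z2_4 rp_z2_5 rp_z2_6 rp_z2_7 rp_z2_8 rp_z3_0 rp_z3_1 rp_z3_2 rp_z3_3 rp_z3_4 rp_z3_5 rp_z3_6 rp_z3_7 rp_z3_8) simp_all

lemma rp_sq26: "ratpoly3 sq26"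
  unfolding sq26_def[abs_def] by (intro rp_add rp_cmul rp_z0_0 rp_z0_1 rp_z0_2 rp_z0_3 rp_z0_4 rp_z0_5 rp_z0_6 rp_z0_7 rp_z0_8 rp_z0_9 rp_z0_10 rp_z0_11 rp_z0_12 rp_z0_13 rp_z1_0 rp_z1_1 rp_z1_2 rp_z1_3 rp_z1_4 rp_z1_5 rp_z1_6 rp_z1_7 rp_z1_8 rp_z2_0 rp_z2_1 rp_z2_2 rp_z2_3 rp_z2_4 rp_z2_5 rp_z2_6 rp_z2_7 rp_z2_8 rp_z3_0 rp_z3_1 rp_z3_2 rp_z3_3 rp_z3_4 rp_z3_5 rp_z3_6 rp_z3_7 rp_z3_8) simp_all

lemma rp_sq27: "ratpoly3 sq27"
  unfolding sq27_def[abs_def] by (intro rp_add rp_cmul rp_z0_0 rp_z0_1 rp_z0_2 rp_z0_3 rp_z0_4 rp_z0_5 rp_z0_6 rp_z0_7 rp_z0_8 rp_z0_9 rp_z0_10 rp_z0_11 rp_z0_12 rp_z0_13 rp_z1_0 rp_z1_1 rp_z1_2 rp_z1_3 rp_z1_4 rp_z1_5 rp_z1_6 rp_z1_7 rp_z1_8 rp_z2_0 rp_z2_1 rp_z2_2 rp_z2_3 rp_z2_4 rp_z2_5 rp_z2_6 rp_z2_7 rp_z2_8 rp_z3_0 rp_z3_1 rp_z3_2 rp_z3_3 rp_z3_4 rp_z3_5 rp_z3_6 rp_z3_7 rp_z3_8) simp_all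

lemma rp_sq28: "ratpoly3 sq28"
  unfolding sq28_def[abs_def] by (intro rp_add rp_cmul rp_z0_0 rp_z0_1 rp_z0_2 rp_z0_3 rp_z0_4 rp_z0_5 rp_z0_6 rp_z0_7 rp_z0_8 rp_z0_9 rp_z0_10 rp_z0_11 rp_z0_12 rp_z0_13 rp_z1_0 rp_z1_1 rp_z1_2 rp_z1_3 rp_z1_4 rp_z1_5 rp_z1_6 rp_z1_7 rp_z1_8 rp_z2_0 rp_z2_1 rp_z2_2 rp_z2_3 rp_z2_4 rp_z2_5 rp_z2_6 rp_z2_7 rp_z2_8 rp_z3_0 rp_z3_1 rp_z3_2 rp_z3_3 rp_z3_4 rp_z3_5 rp_z3_6 rp_z3_7 rp_z3_8) simp_all

lemma rp_sq29: "ratpoly3 sq29"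
  unfolding sq29_def[abs_def] by (intro rp_add rp_cmul rp_z0_0 rp_z0_1 rp_z0_2 rp_z0_3 rp_z0_4 rp_z0_5 rp_z0_6 rp_z0_7 rp_z0_8 rp_z0_9 rp_z0_10 rp_z0_11 rp_z0_12 rp_z0_13 rp_z1_0 rp_z1_1 rp_z1_2 rp_z1_3 rp_z1_4 rp_z1_5 rp_z1_6 rp_z1_7 rp_z1_8 rp_z2_0 rp_z2_1 rp_z2_2 rp_z2_3 rp_z2_4 rp_z2_5 rp_z2_6 rp_z2_7 rp_z2_8 rp_z3_0 rp_z3_1 rp_z3_2 rp_z3_3 rp_z3_4 rp_z3_5 rp_z3_6 rp_z3_7 rp_z3_8) simp_all

lemma rp_sq30: "ratpoly3 sq30"
  unfolding sq30_def[abs_def] by (intro rp_add rp_cmul rp_z0_0 rp_z0_1 rp_z0_2 rp_z0_3 rp_z0_4 rp_z0_5 rp_z0_6 rp_z0_7 rp_z0_8 rp_z0_9 rp_z0_10 rp_z0_11 rp_z0_12 rp_z0_13 rp_z1_0 rp_z1_1 rp_z1_2 rp_z1_3 rp_z1_4 rp_z1_5 rp_z1_6 rp_z1_7 rp_z1_8 rp_z2_0 rp_z2_1 rp_z2_2 rp_z2_3 rp_z2_4 rp_z2_5 rp_z2_6 rp_z2_7 rp_z2_8 rp_z3_0 rp_z3_1 rp_z3_2 rp_z3_3 rp_z3_4 rp_z3_5 rp_z3_6 rp_z3_7 rp_z3_8) simp_all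

lemma rp_sq31: "ratpoly3 sq31"
  unfolding sq31_def[abs_def] by (intro rp_add rp_cmul rp_z0_0 rp_z0_1 rp_z0_2 rp_z0_3 rp_z0_4 rp_z0_5 rp_z0_6 rp_z0_7 rp_z0_8 rp_z0_9 rp_z0_10 rp_z0_11 rp_z0_12 rp_z0_13 rp_z1_0 rp_z1_1 rp_z1_2 rp_z1_3 rp_z1_4 rp_z1_5 rp_z1_6 rp_z1_7 rp_z1_8 rp_z2_0 rp_z2_1 rp_z2_2 rp_z2_3 rp_z2_4 rp_z2_5 rp_z2_6 rp_z2_7 rp_z2_8 rp_z3_0 rp_z3_1 rp_z3_2 rp_z3_3 rp_z3_4 rp_z3_5 rp_z3_6 rp_z3_7 rp_z3_8) simp_all

lemma rp_sq32: "ratpoly3 sq32"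
  unfolding sq32_def[abs_def] by (intro rp_add rp_cmul rp_z0_0 rp_z0_1 rp_z0_2 rp_z0_3 rp_z0_4 rp_z0_5 rp_z0_6 rp_z0_7 rp_z0_8 rp_z0_9 rp_z0_10 rp_z0_11 rp_z0_12 rp_z0_13 rp_z1_0 rp_z1_1 rp_z1_2 rp_z1_3 rp_z1_4 rp_z1_5 rp_z1_6 rp_z1_7 rp_z1_8 rp_z2_0 rp_z2_1 rp_z2_2 rp_z2_3 rp_z2_4 rp_z2_5 rp_z2_6 rp_z2_7 rp_z2_8 rp_z3_0 rp_z3_1 rp_z3_2 rp_z3_3 rp_z3_4 rp_z3_5 rp_z3_6 rp_z3_7 rp_z3_8) simp_all

lemma rp_sq33: "ratpoly3 sq33"
  unfolding sq33_def[abs_def] by (intro rp_add rp_cmul rp_z0_0 rp_z0_1 rp_z0_2 rp_z0_3 rp_z0_4 rp_z0_5 rp_z0_6 rp_z0_7 rp_z0_8 rp_z0_9 rp_z0_10 rp_z0_11 rp_z0_12 rp_z0_13 rp_z1_0 rp_z1_1 rp_z1_2 rp_z1_3 rp_z1_4 rp_z1_5 rp_z1_6 rp_z1_7 rp_z1_8 rp_z2_0 rp_z2_1 rp_z2_2 rp_z2_3 rp_z2_4 rp_z2_5 rp_z2_6 rp_z2_7 rp_z2_8 rp_z3_0 rp_z3_1 rp_z3_2 rp_z3_3 rp_z3_4 rp_z3_5 rp_z3_6 rp_z3_7 rp_z3_8) simp_all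

lemma rp_sq34: "ratpoly3 sq34"
  unfolding sq34_def[abs_def] by (intro rp_add rp_cmul rp_z0_0 rp_z0_1 rp_z0_2 rp_z0_3 rp_z0_4 rp_z0_5 rp_z0_6 rp_z0_7 rp_z0_8 rp_z0_9 rp_z0_10 rp_z0_11 rp_z0_12 rp_z0_13 rp_z1_0 rp_z1_1 rp_z1_2 rp_z1_3 rp_z1_4 rp_z1_5 rp_z1_6 rp_z1_7 rp_z1_8 rp_z2_0 rp_z2_1 rp_z2_2 rp_z2_3 rp_z2_4 rp_z2_5 rp_z2_6 rp_z2_7 rp_z2_8 rp_z3_0 rp_z3_1 rp_z3_2 rp_z3_3 rp_z3_4 rp_z3_5 rp_z3_6 rp_z3_7 rp_z3_8) simp_all

lemma rp_sq35: "ratpoly3 sq35"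
  unfolding sq35_def[abs_def] by (intro rp_add rp_cmul rp_z0_0 rp_z0_1 rp_z0_2 rp_z0_3 rp_z0_4 rp_z0_5 rp_z0_6 rp_z0_7 rp_z0_8 rp_z0_9 rp_z0_10 rp_z0_11 rp_z0_12 rp_z0_13 rp_z1_0 rp_z1_1 rp_z1_2 rp_z1_3 rp_z1_4 rp_z1_5 rp_z1_6 rp_z1_7 rp_z1_8 rp_z2_0 rp_z2_1 rp_z2_2 rp_z2_3 rp_z2_4 rp_z2_5 rp_z2_6 rp_z2_7 rp_z2_8 rp_z3_0 rp_z3_1 rp_z3_2 rp_z3_3 rp_z3_4 rp_z3_5 rp_z3_6 rp_z3_7 rp_z3_8) simp_all

lemma rp_sq36: "ratpoly3 sq36"
  unfolding sq36_def[abs_def] by (intro rp_add rp_cmul rp_z0_0 rp_z0_1 rp_z0_2 rp_z0_3 rp_z0_4 rp_z0_5 rp_z0_6 rp_z0_7 rp_z0_8 rp_z0_9 rp_z0_10 rp_z0_11 rp_z0_12 rp_z0_13 rp_z1_0 rp_z1_1 rp_z1_2 rp_z1_3 rp_z1_4 rp_z1_5 rp_z1_6 rp_z1_7 rp_z1_8 rp_z2_0 rp_z2_1 rp_z2_2 rp_z2_3 rp_z2_4 rp_z2_5 rp_z2_6 rp_z2_7 rp_z2_8 rp_z3_0 rp_z3_1 rp_z3_2 rp_z3_3 rp_z3_4 rp_z3_5 rp_z3_6 rp_z3_7 rp_z3_8) simp_all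

lemma rp_sq37: "ratpoly3 sq37"
  unfolding sq37_def[abs_def] by (intro rp_add rp_cmul rp_z0_0 rp_z0_1 rp_z0_2 rp_z0_3 rp_z0_4 rp_z0_5 rp_z0_6 rp_z0_7 rp_z0_8 rp_z0_9 rp_z0_10 rp_z0_11 rp_z0_12 rp_z0_13 rp_z1_0 rp_z1_1 rp_z1_2 rp_z1_3 rp_z1_4 rp_z1_5 rp_z1_6 rp_z1_7 rp_z1_8 rp_z2_0 rp_z2_1 rp_z2_2 rp_z2_3 rp_z2_4 rp_z2_5 rp_z2_6 rp_z2_7 rp_z2_8 rp_z3_0 rp_z3_1 rp_z3_2 rp_z3_3 rp_z3_4 rp_z3_5 rp_z3_6 rp_z3_7 rp_z3_8) simp_all

lemma rp_sq38: "ratpoly3 sq38"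
  unfolding sq38_def[abs_def] by (intro rp_add rp_cmul rp_z0_0 rp_z0_1 rp_z0_2 rp_z0_3 rp_z0_4 rp_z0_5 rp_z0_6 rp_z0_7 rp_z0_8 rp_z0_9 rp_z0_10 rp_z0_11 rp_z0_12 rp_z0_13 rp_z1_0 rp_z1_1 rp_z1_2 rp_z1_3 rp_z1_4 rp_z1_5 rp_z1_6 rp_z1_7 rp_z1_8 rp_z2_0 rp_z2_1 rp_z2_2 rp_z2_3 rp_z2_4 rp_z2_5 rp_z2_6 rp_z2_7 rp_z2_8 rp_z3_0 rp_z3_1 rp_z3_2 rp_z3_3 rp_z3_4 rp_z3_5 rp_z3_6 rp_z3_7 rp_z3_8) simp_all

lemma rp_sq39: "ratpoly3 sq39"
  unfolding sq39_def[abs_def] by (intro rp_add rp_cmul rp_z0_0 rp_z0_1 rp_z0_2 rp_z0_3 rp_z0_4 rp_z0_5 rp_z0_6 rp_z0_7 rp_z0_8 rp_z0_9 rp_z0_10 rp_z0_11 rp_z0_12 rp_z0_13 rp_z1_0 rp_z1_1 rp_z1_2 rp_z1_3 rp_z1_4 rp_z1_5 rp_z1_6 rp_z1_7 rp_z1_8 rp_z2_0 rp_z2_1 rp_z2_2 rp_z2_3 rp_z2_4 rp_z2_5 rp_z2_6 rp_z2_7 rp_z2_8 rp_z3_0 rp_z3_1 rp_z3_2 rp_z3_3 rp_z3_4 rp_z3_5 rp_z3_6 rp_z3_7 rp_z3_8) simp_all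

lemma rp_sq40: "ratpoly3 sq40"
  unfolding sq40_def[abs_def] by (intro rp_add rp_cmul rp_z0_0 rp_z0_1 rp_z0_2 rp_z0_3 rp_z0_4 rp_z0_5 rp_z0_6 rp_z0_7 rp_z0_8 rp_z0_9 rp_z0_10 rp_z0_11 rp_z0_12 rp_z0_13 rp_z1_0 rp_z1_1 rp_z1_2 rp_z1_3 rp_z1_4 rp_z1_5 rp_z1_6 rp_z1_7 rp_z1_8 rp_z2_0 rp_z2_1 rp_z2_2 rp_z2_3 rp_z2_4 rp_z2_5 rp_z2_6 rp_z2_7 rp_z2_8 rp_z3_0 rp_z3_1 rp_z3_2 rp_z3_3 rp_z3_4 rp_z3_5 rp_z3_6 rp_z3_7 rp_z3_8) simp_all

definition dsl :: "rat list" where "dsl = [1/2570400, 1/199398780000, 1/12103242035850000, 1/125654684037219820350000, 1/1313476901626906695322198800, 1/25546752286129175856696551660400, 1/5659049574775675591954624806860418300, 1/10238983252604187872072740599431030639774400, 1/34309293270007963326390654779909808143730000000, 1/532318646405819426881731178176330387649649730000000, 1/342787841372245791857521271409102862028296153286546580000, 1/10498925577914819695315025616520034647852280297928709708620000, 1/214969524086649803313474666534222167979881168070116199033694230000, 164526670629664622087969891047739/255383116770375343451873486997788400, 1/10281600, 1/6949076400, 1/5852433251624400, 1/450316347698301174921600, 1/12490832140707406635823766400, 1/10938529952663337618848822131200, 1/1033536380914988306760418870606732800, 1/1193950283718292560027257662707065849700, 49237503276768813011/31819069263287603852100, 1/3383100, 1/651283964100, 1/7463816105407200, 1/60787509191842296679200,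 1/670422334482982837464231600, 1/12393064938720858025473112719600, 1/1261852960990688624602673324976117600, 1/76462946844552530371166602776208105010400, 72152290805180699738/68580072806717109876525, 1/4025700, 1/70845610500, 1/20897630074660500, 1/383688275254325048700, 1/76150234361378504743208100, 1/28569348888948757655290902995100, 1/5275859045504848981939602965465750700, 1/17988125165701145859088384932061914550200, 1211996275190177897153/632734724012447172551400]"

definition qsl :: "(real \<Rightarrow> real \<Rightarrow> real \<Rightarrow> real) list" where "qsl = [sq0, sq1, sq2, sq3, sq4, sq5, sq6, sq7, sq8, sq9, sq10, sq11, sq12, sq13, sq14, sq15, sq16, sq17, sq18, sq19, sq20, sq21, sq22, sq23, sq24, sq25, sq26, sq27, sq28, sq29, sq30, sq31, sq32, sq33, sq34, sq35, sq36, sq37, sq38, sq39, sq40]"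

lemma sum_map2: "length ds = n \<Longrightarrow> length qs = n \<Longrightarrow>
  (\<Sum>i<n. of_rat (ds!i) * ((qs!i) a b e)^2) = sum_list (map2 (\<lambda>d q. of_rat d * (q a b e)^2) ds qs)"
  by (simp add: sum_list_sum_nth atLeast0LessThan)

lemma sumR: "(\<Sum>i<41. of_rat (dsl!i) * ((qsl!i) a b e)^2) = ((1/2570400)*(sq0 a b e)^2 + (1/199398780000)*(sq1 a b e)^2 + (1/12103242035850000)*(sq2 a b e)^2 + (1/125654684037219820350000)*(sq3 a b e)^2 + (1/1313476901626906695322198800)*(sq4 a b e)^2 + (1/25546752286129175856696551660400)*(sq5 a b e)^2 + (1/5659049574775675591954624806860418300)*(sq6 a b e)^2 + (1/10238983252604187872072740599431030639774400)*(sq7 a b e)^2 + (1/34309293270007963326390654779909808143730000000)*(sq8 a b e)^2 + (1/532318646405819426881731178176330387649649730000000)*(sq9 a b e)^2 + (1/342787841372245791857521271409102862028296153286546580000)*(sq10 a b e)^2 + (1/10498925577914819695315025616520034647852280297928709708620000)*(sq11 a b e)^2 + (1/214969524086649803313474666534222167979881168070116199033694230000)*(sq12 a b e)^2 + (164526670629664622087969891047739/255383116770375343451873486997788400)*(sq13 a b e)^2 + (1/10281600)*(sq14 a b e)^2 + (1/6949076400)*(sq15 a b e)^2 + (1/5852433251624400)*(sq16 a b e)^2 + (1/450316347698301174921600)*(sq17 a b e)^2 + (1/12490832140707406635823766400)*(sq18 a b e)^2 + (1/10938529952663337618848822131200)*(sq19 a b e)^2 + (1/1033536380914988306760418870606732800)*(sq20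 a b e)^2 + (1/1193950283718292560027257662707065849700)*(sq21 a b e)^2 + (49237503276768813011/31819069263287603852100)*(sq22 a b e)^2 + (1/3383100)*(sq23 a b e)^2 + (1/651283964100)*(sq24 a b e)^2 + (1/7463816105407200)*(sq25 a b e)^2 + (1/60787509191842296679200)*(sq26 a b e)^2 + (1/670422334482982837464231600)*(sq27 a b e)^2 + (1/12393064938720858025473112719600)*(sq28 a b e)^2 + (1/1261852960990688624602673324976117600)*(sq29 a b e)^2 + (1/76462946844552530371166602776208105010400)*(sq30 a b e)^2 + (72152290805180699738/68580072806717109876525)*(sq31 a b e)^2 + (1/4025700)*(sq32 a b e)^2 + (1/70845610500)*(sq33 a b e)^2 + (1/20897630074660500)*(sq34 a b e)^2 + (1/383688275254325048700)*(sq35 a b e)^2 + (1/76150234361378504743208100)*(sq36 a b e)^2 + (1/28569348888948757655290902995100)*(sq37 a b e)^2 + (1/5275859045504848981939602965465750700)*(sq38 a b e)^2 + (1/17988125165701145859088384932061914550200)*(sq39 a b e)^2 + (1211996275190177897153/632734724012447172551400)*(sq40 a b e)^2)"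
  by (subst sum_map2[where n=41], simp add: dsl_def, simp add: qsl_def,
      simp only: dsl_def qsl_def zip_Cons_Cons zip_Nil list.map prod.case sum_list.Cons sum_list.Nil
       of_rat_divide of_rat_numeral_eq of_rat_1 add.assoc add_0_right)

lemma cancel9450: "(9450*x0 + 9450*x1 + 9450*x2 + 9450*x3)/9450 = x0 + (x1 + (x2 + (x3::real)))"
  by simp

lemma sos_id: "Hnorm 3 [4,4] (vec3 (a\<^sup>2) (b\<^sup>2) (e\<^sup>2)) - Hnorm 3 [5,2,1] (vec3 (a\<^sup>2) (b\<^sup>2) (e\<^sup>2))
   = (\<Sum>i<41. of_rat (dsl!i) * ((qsl!i) a b e)^2)"
  unfolding sumR Hdiff step1 gram0 gram1 gram2 gram3 cancel9450 by (simp only: add.assoc)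

lemma sos_part: "rat_sos3 41 (\<lambda>a b e. Hnorm 3 [4,4] (vec3 (a\<^sup>2) (b\<^sup>2) (e\<^sup>2))
                              - Hnorm 3 [5,2,1] (vec3 (a\<^sup>2) (b\<^sup>2) (e\<^sup>2)))"
  unfolding rat_sos3_def
proof (intro exI conjI allI)
  show "length dsl = 41" by (simp add: dsl_def)
  show "length qsl = 41" by (simp add: qsl_def)
  show "\<forall>d\<in>set dsl. 0 < d" by (simp add: dsl_def)
  show "\<forall>q\<in>set qsl. ratpoly3 q" by (simp add: qsl_def rp_sq0 rp_sq1 rp_sq2 rp_sq3 rp_sq4 rp_sq5 rp_sq6 rp_sq7 rp_sq8 rp_sq9 rp_sq10 rp_sq11 rp_sq12 rp_sq13 rp_sq14 rp_sq15 rp_sq16 rp_sq17 rp_sq18 rp_sq19 rp_sq20 rp_sq21 rp_sq22 rp_sq23 rp_sq24 rp_sq25 rp_sq26 rp_sq27 rp_sq28 rp_sq29 rp_sq30 rp_sq31 rp_sq32 rp_sq33 rp_sq34 rp_sq35 rp_sq36 rp_sq37 rp_sq38 rp_sq39 rp_sq40)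
  fix a b e :: real
  show "Hnorm 3 [4,4] (vec3 (a\<^sup>2) (b\<^sup>2) (e\<^sup>2)) - Hnorm 3 [5,2,1] (vec3 (a\<^sup>2) (b\<^sup>2) (e\<^sup>2))
   = (\<Sum>i<41. of_rat (dsl!i) * ((qsl!i) a b e)^2)" by (rule sos_id)
qed


fun parts :: "nat \<Rightarrow> nat \<Rightarrow> nat \<Rightarrow> nat list list" where
  "parts 0 n m = (if n = 0 then [[]] else [])"
| "parts (Suc f) n m = (if n = 0 then [[]] else concat (map (\<lambda>k. map ((#) k) (parts f (n-k) k)) [1..<Suc (min m n)]))"

lemma parts_complete:
  "sorted_wrt (\<ge>) lam \<Longrightarrow> 0 \<notin> set lam \<Longrightarrow> (\<forall>x\<in>set lam. x \<le> m) \<Longrightarrow> length lam \<le> f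
   \<Longrightarrow> lam \<in> set (parts f (sum_list lam) m)"
proof (induction lam arbitrary: f m)
  case Nil
  then show ?case by (cases f) auto
next
  case (Cons x xs)
  then obtain f' where f: "f = Suc f'" by (cases f) auto
  have x: "1 \<le> x" "x \<le> m" using Cons.prems by auto
  have xs_in: "xs \<in> set (parts f' (sum_list xs) x)"
    using Cons.prems f by (intro Cons.IH) auto
  have mem: "x \<in> set [1..<Suc (min m (sum_list (x#xs)))]" proof -
    have "x \<le> min m (sum_list (x#xs))" using x by simp
    then show ?thesis using x unfolding set_upt atLeastLessThan_iff less_Suc_eq_le by blast
  qed
  have ne: "sum_list (x#xs) \<noteq> 0" using x by simp
  have "x#xs \<in> (\<Union>k\<in>set [1..<Suc (min m (sum_list (x#xs)))]. set (map ((#) k) (parts f' (sum_list (x#xs) - k) k)))"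
    using mem xs_in by (intro UN_I[OF mem]) simp
  then show ?case unfolding f parts.simps if_not_P[OF ne] set_concat set_map image_image .
qed

lemma len_le_sum: "0 \<notin> set xs \<Longrightarrow> length xs \<le> sum_list (xs::nat list)"
  by (induction xs) (auto simp: Suc_le_eq)

lemma part_in: "is_partition lam \<Longrightarrow> sum_list lam \<le> 7 \<Longrightarrow> lam \<in> set (parts 7 (sum_list lam) 7)"
  unfolding is_partition_def
proof (elim conjE, rule parts_complete)
  assume "0 \<notin> set lam" "sum_list lam \<le> 7"
  then show "\<forall>x\<in>set lam. x \<le> 7" "length lam \<le> 7"
    using member_le_sum_list[of _ lam] len_le_sum[of lam] by force+
qed auto

lemma dominates_code[code]: "dominates mu lam = (sum_list mu = sum_list lam \<and>
   (\<forall>k\<in>set [0..<Suc (max (length lam) (length mu))]. sum_list (take k lam) \<le> sum_list (take k mu)))"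
proof
  assume "dominates mu lam" then show "sum_list mu = sum_list lam \<and>
   (\<forall>k\<in>set [0..<Suc (max (length lam) (length mu))]. sum_list (take k lam) \<le> sum_list (take k mu))"
    unfolding dominates_def by auto
next
  assume a: "sum_list mu = sum_list lam \<and>
   (\<forall>k\<in>set [0..<Suc (max (length lam) (length mu))]. sum_list (take k lam) \<le> sum_list (take k mu))"
  show "dominates mu lam" unfolding dominates_def
  proof (intro conjI allI)
    fix k
    show "sum_list (take k lam) \<le> sum_list (take k mu)"
    proof (cases "k \<le> max (length lam) (length mu)")
      case True then show ?thesis using a by auto
    next
      case False then show ?thesis using a by auto
    qed
  qed (use a in auto)
qed

definition IP :: "(nat list \<times> nat list) list" where
  "IP = [([4,1,1],[3,3]), ([3,3],[4,1,1]), ([3,1,1,1],[2,2,2]), ([2,2,2],[3,1,1,1]),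
         ([5,1,1],[4,3]), ([4,3],[5,1,1]), ([4,1,1,1],[3,3,1]), ([4,1,1,1],[3,2,2]),
         ([3,3,1],[4,1,1,1]), ([3,2,2],[4,1,1,1]), ([3,1,1,1,1],[2,2,2,1]), ([2,2,2,1],[3,1,1,1,1])]"

lemma check_all: "\<forall>n\<in>set [0..<8]. \<forall>lam\<in>set (parts 7 n 7). \<forall>mu\<in>set (parts 7 n 7).
   incomparable lam mu \<longrightarrow> (lam, mu) \<in> set IP"
  unfolding IP_def incomparable_def by code_simp


lemma wit0: "Hnorm 3 [3,3] (vec3 2 2 3) - Hnorm 3 [4,1,1] (vec3 2 2 3) < 0"
  by (simp add: Hnorm_def hpart_def hcomp3 vec3_def atMost_nat_numeral)
lemma wit1: "Hnorm 3 [4,1,1] (vec3 0 0 1) - Hnorm 3 [3,3] (vec3 0 0 1) < 0"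
  by (simp add: Hnorm_def hpart_def hcomp3 vec3_def atMost_nat_numeral)
lemma wit2: "Hnorm 3 [2,2,2] (vec3 1 1 2) - Hnorm 3 [3,1,1,1] (vec3 1 1 2) < 0"
  by (simp add: Hnorm_def hpart_def hcomp3 vec3_def atMost_nat_numeral)
lemma wit3: "Hnorm 3 [3,1,1,1] (vec3 0 0 1) - Hnorm 3 [2,2,2] (vec3 0 0 1) < 0"
  by (simp add: Hnorm_def hpart_def hcomp3 vec3_def atMost_nat_numeral)
lemma wit4: "Hnorm 3 [4,3] (vec3 1 1 2) - Hnorm 3 [5,1,1] (vec3 1 1 2) < 0"
  by (simp add: Hnorm_def hpart_def hcomp3 vec3_def atMost_nat_numeral)
lemma wit5: "Hnorm 3 [5,1,1] (vec3 0 0 1) - Hnorm 3 [4,3] (vec3 0 0 1) < 0"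
  by (simp add: Hnorm_def hpart_def hcomp3 vec3_def atMost_nat_numeral)
lemma wit6: "Hnorm 3 [3,3,1] (vec3 2 2 3) - Hnorm 3 [4,1,1,1] (vec3 2 2 3) < 0"
  by (simp add: Hnorm_def hpart_def hcomp3 vec3_def atMost_nat_numeral)
lemma wit7: "Hnorm 3 [3,2,2] (vec3 0 1 2) - Hnorm 3 [4,1,1,1] (vec3 0 1 2) < 0"
  by (simp add: Hnorm_def hpart_def hcomp3 vec3_def atMost_nat_numeral)
lemma wit8: "Hnorm 3 [4,1,1,1] (vec3 0 0 1) - Hnorm 3 [3,3,1] (vec3 0 0 1) < 0"
  by (simp add: Hnorm_def hpart_def hcomp3 vec3_def atMost_nat_numeral)
lemma wit9: "Hnorm 3 [4,1,1,1] (vec3 0 0 1) - Hnorm 3 [3,2,2] (vec3 0 0 1) < 0"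
  by (simp add: Hnorm_def hpart_def hcomp3 vec3_def atMost_nat_numeral)
lemma wit10: "Hnorm 3 [2,2,2,1] (vec3 1 1 2) - Hnorm 3 [3,1,1,1,1] (vec3 1 1 2) < 0"
  by (simp add: Hnorm_def hpart_def hcomp3 vec3_def atMost_nat_numeral)
lemma wit11: "Hnorm 3 [3,1,1,1,1] (vec3 0 0 1) - Hnorm 3 [2,2,2,1] (vec3 0 0 1) < 0"
  by (simp add: Hnorm_def hpart_def hcomp3 vec3_def atMost_nat_numeral)

lemma sos_nonneg:
  assumes "rat_sos3 m P" shows "P a b e \<ge> 0"
proof -
  obtain ds qs where h: "length ds = m" "length qs = m" "\<forall>d\<in>set ds. d > 0"
    "\<forall>a b e. P a b e = (\<Sum>i<m. of_rat (ds ! i) * ((qs ! i) a b e)\<^sup>2)"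
    using assms unfolding rat_sos3_def by blast
  have "(\<Sum>i<m. of_rat (ds ! i) * ((qs ! i) a b e)\<^sup>2) \<ge> 0"
  proof (rule sum_nonneg)
    fix i assume "i \<in> {..<m}"
    then have "ds ! i > 0" using h(1,3) by auto
    then show "of_rat (ds ! i) * ((qs ! i) a b e)\<^sup>2 \<ge> 0" by simp
  qed
  then show ?thesis using h(4) by simp
qed

lemma Hnorm_vec3: "Hnorm 3 lam x = Hnorm 3 lam (vec3 (x 0) (x 1) (x 2))"
proof -
  have "\<And>d. hcomp 3 d x = hcomp 3 d (vec3 (x 0) (x 1) (x 2))" by (simp add: hcomp3 vec3_def)
  then show ?thesis unfolding Hnorm_def hpart_def by simp
qed

lemma nonneg_part: "\<forall>x. nonneg_orthant 3 x \<longrightarrow> Hnorm 3 [4,4] x - Hnorm 3 [5,2,1] x \<ge> 0"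
proof (intro allI impI)
  fix x assume "nonneg_orthant 3 x"
  then have nn: "x 0 \<ge> 0" "x 1 \<ge> 0" "x 2 \<ge> 0" unfolding nonneg_orthant_def by auto
  define a where "a = sqrt (x 0)"
  define b where "b = sqrt (x 1)"
  define e where "e = sqrt (x 2)"
  have v: "vec3 (x 0) (x 1) (x 2) = vec3 (a\<^sup>2) (b\<^sup>2) (e\<^sup>2)" using nn by (simp add: a_def b_def e_def)
  have "0 \<le> Hnorm 3 [4,4] (vec3 (a\<^sup>2) (b\<^sup>2) (e\<^sup>2)) - Hnorm 3 [5,2,1] (vec3 (a\<^sup>2) (b\<^sup>2) (e\<^sup>2))"
    using sos_nonneg[OF sos_part, of a b e] by simp
  then show "Hnorm 3 [4,4] x - Hnorm 3 [5,2,1] x \<ge> 0"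
    using Hnorm_vec3[of "[4,4]" x] Hnorm_vec3[of "[5,2,1]" x] v by simp
qed

lemma incomp_part: "incomparable [4,4] [5,2,1]"
  unfolding incomparable_def dominates_code by simp

lemma wit_all: "(lam, mu) \<in> set IP \<Longrightarrow> \<exists>x. nonneg_orthant 3 x \<and> Hnorm 3 mu x - Hnorm 3 lam x < 0"
  unfolding IP_def
  apply (simp only: list.set insert_iff empty_iff prod.inject simp_thms)
  apply (elim disjE conjE)
  subgoal by (rule exI[of _ "vec3 2 2 3"]) (use wit0 in \<open>simp add: nonneg_orthant_def vec3_def\<close>)
  subgoal by (rule exI[of _ "vec3 0 0 1"]) (use wit1 in \<open>simp add: nonneg_orthant_def vec3_def\<close>)
  subgoal by (rule exI[of _ "vec3 1 1 2"]) (use wit2 in \<open>simp add: nonneg_orthant_def vec3_def\<close>)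
  subgoal by (rule exI[of _ "vec3 0 0 1"]) (use wit3 in \<open>simp add: nonneg_orthant_def vec3_def\<close>)
  subgoal by (rule exI[of _ "vec3 1 1 2"]) (use wit4 in \<open>simp add: nonneg_orthant_def vec3_def\<close>)
  subgoal by (rule exI[of _ "vec3 0 0 1"]) (use wit5 in \<open>simp add: nonneg_orthant_def vec3_def\<close>)
  subgoal by (rule exI[of _ "vec3 2 2 3"]) (use wit6 in \<open>simp add: nonneg_orthant_def vec3_def\<close>)
  subgoal by (rule exI[of _ "vec3 0 1 2"]) (use wit7 in \<open>simp add: nonneg_orthant_def vec3_def\<close>)
  subgoal by (rule exI[of _ "vec3 0 0 1"]) (use wit8 in \<open>simp add: nonneg_orthant_def vec3_def\<close>)
  subgoal by (rule exI[of _ "vec3 0 0 1"]) (use wit9 in \<open>simp add: nonneg_orthant_def vec3_def\<close>)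
  subgoal by (rule exI[of _ "vec3 1 1 2"]) (use wit10 in \<open>simp add: nonneg_orthant_def vec3_def\<close>)
  subgoal by (rule exI[of _ "vec3 0 0 1"]) (use wit11 in \<open>simp add: nonneg_orthant_def vec3_def\<close>)
  done

theorem theorem1p2:
  shows "rat_sos3 41 (\<lambda>a b e. Hnorm 3 [4,4] (vec3 (a\<^sup>2) (b\<^sup>2) (e\<^sup>2))
                              - Hnorm 3 [5,2,1] (vec3 (a\<^sup>2) (b\<^sup>2) (e\<^sup>2)))
    \<and> (\<forall>x. nonneg_orthant 3 x \<longrightarrow> Hnorm 3 [4,4] x - Hnorm 3 [5,2,1] x \<ge> 0)
    \<and> incomparable [4,4] [5,2,1]
    \<and> (\<forall>lam mu. is_partition lam \<and> is_partition mu \<and> sum_list lam = sum_list mu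
          \<and> sum_list lam \<le> 7 \<and> incomparable lam mu \<longrightarrow>
          \<not> (\<forall>x. nonneg_orthant 3 x \<longrightarrow> Hnorm 3 mu x - Hnorm 3 lam x \<ge> 0))"
proof (intro conjI sos_part nonneg_part incomp_part allI impI)
  fix lam mu
  assume H: "is_partition lam \<and> is_partition mu \<and> sum_list lam = sum_list mu
          \<and> sum_list lam \<le> 7 \<and> incomparable lam mu"
  define n where "n = sum_list lam"
  have l: "lam \<in> set (parts 7 n 7)" using part_in[of lam] H by (simp add: n_def)
  have m: "mu \<in> set (parts 7 n 7)" using part_in[of mu] H by (simp add: n_def)
  have nn: "n \<in> set [0..<8]" using H by (simp add: n_def)
  have "(lam, mu) \<in> set IP" using check_all nn l m H by blast
  then obtain x where "nonneg_orthant 3 x" "Hnorm 3 mu x - Hnorm 3 lam x < 0" using wit_all by blast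
  then show "\<not> (\<forall>x. nonneg_orthant 3 x \<longrightarrow> Hnorm 3 mu x - Hnorm 3 lam x \<ge> 0)" by force
qed

end
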